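(* Fix a prime $p$, $n\in\mathbb{N}$ and $\theta\in\Omega_p$. Let $\Gamma_n=\frac1{p^n}\mathbb{Z}\times\frac1{p^n}\mathbb{Z}$, $\pi_{\theta_{2n}}=\lambda_{(\sigma_\theta)_n}\circ\upsilon_n$, and let $D_{p,n}$ be the multiplication operator by $\mathbb{L}^\Sigma_{p,n}$ on $\ell^2(\Gamma_n)$. Then $(C^*(\mathbb{Z}^2,\sigma_{\theta_{2n}}),\ell^2(\Gamma_n),D_{p,n})$ with representation $\pi_{\theta_{2n}}$ is a spectral triple for the noncommutative torus $C^*(\mathbb{Z}^2,\sigma_{\theta_{2n}})$, with associated smooth subalgebra $C_C(\mathbb{Z}^2,\sigma_{\theta_{2n}})$.
   Context: $\Omega_p$: sequences $(\theta_m)_{m\ge0}$ in $[0,1)$ with $p\theta_m\equiv\theta_{m-1}\bmod\mathbb{Z}$ for $m\ge1$. For $\vartheta\in[0,1]$, $\sigma_\vartheta$ on $\mathbb{Z}^2$ is $\sigma_\vartheta(z,y)=\exp(\pi i\vartheta(z_1y_2-z_2y_1))$. On $\mathbb{Z}[\tfrac1p]\times\mathbb{Z}[\tfrac1p]$, $\sigma_\theta((\tfrac{q_1}{p^{k_1}},\tfrac{q_2}{p^{k_2}}),(\tfrac{q_3}{p^{k_3}},\tfrac{q_4}{p^{k_4}}))=\exp(2\pi i\theta_{k_1+k_4}q_1q_4)$, and $(\sigma_\theta)_n$ is its restriction to the subgroup $\Gamma_n$. For a multiplier $\sigma$ on a discrete group $G$: $C^*(G,\sigma)$ is the enveloping $C^*$-algebra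 of $\ell^1(G,\sigma)$ (twisted convolution $(f_1*_\sigma f_2)(\gamma)=\sum_{\gamma_1}f_1(\gamma_1)f_2(\gamma_1^{-1}\gamma)\sigma(\gamma_1,\gamma_1^{-1}\gamma)$); $C_C(G,\sigma)$ = finitely supported functions; $\lambda_\sigma$ = left-$\sigma$ regular representation on $\ell^2(G)$, $(\lambda_\sigma(f)g)(\gamma)=\sum_{\gamma_1}\sigma(\gamma_1,\gamma_1^{-1}\gamma)f(\gamma_1)g(\gamma_1^{-1}\gamma)$. $\upsilon_n:C^*(\mathbb{Z}^2,\sigma_{\theta_{2n}})\to C^*(\Gamma_n,(\sigma_\theta)_n)$ is the $*$-isomorphism sending the canonical unitaries $\delta_{(1,0)},\delta_{(0,1)}$ to $\delta_{(1/p^n,0)},\delta_{(0,1/p^n)}$ (both algebras are universal for unitaries $U,V$ with $UV=e^{2\pi i\theta_{2n}}VU$). $\mathbb{L}_p(r)=|r|+\|r\|_p$ ($p$-adic norm), $\mathbb{L}_{p,n}$ its restriction to $\frac1{p^n}\mathbb{Z}$, $\mathbb{L}^\Sigma_{p,n}(\gamma_1,\gamma_2)=\mathbb{L}_{p,n}(\gamma_1)+\mathbb{L}_{p,n}(\gamma_2)$. A spectral triple $(A,H,D)$: unital $C^*$-algebra $A$ with unital faithful representation $\pi$ on $H$, self-adjoint $D$ with compact resolvent, and a dense $*$-subalgebra $\mathcal{A}$ such that $[D,\pi(a)]$ is densely defined and extends to a bounded operator for every $a\in\mathcal{A}$. *)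

theory Defs
  imports "HOL-Analysis.Analysis" "HOL-Library.Product_Plus" "HOL-Computational_Algebra.Primes"
begin

definition Omega :: "nat \<Rightarrow> (nat \<Rightarrow> real) set" where
  "Omega p = {\<theta>. (\<forall>m. 0 \<le> \<theta> m \<and> \<theta> m < 1) \<and>
                  (\<forall>m\<ge>1. of_nat p * \<theta> m - \<theta> (m - 1) \<in> \<int>)}"

definition CC :: "('g \<Rightarrow> complex) set" where
  "CC = {f. finite {\<gamma>. f \<gamma> \<noteq> 0}}"

definition delta :: "'g \<Rightarrow> 'g \<Rightarrow> complex" where
  "delta g = (\<lambda>\<gamma>. if \<gamma> = g then 1 else 0)"

text \<open>Twisted convolution (group written additively, so gamma1^-1 gamma = gamma - gamma1).\<close>
definition twconv :: "('g::ab_group_add \<Rightarrow> 'g \<Rightarrow> complex) \<Rightarrow> ('g \<Rightarrow> complex) \<Rightarrow> ('g \<Rightarrow> complex) \<Rightarrow> 'g \<Rightarrow> complex" where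
  "twconv \<sigma> f1 f2 \<gamma> = (\<Sum>\<gamma>1\<in>{\<gamma>1. f1 \<gamma>1 \<noteq> 0}. f1 \<gamma>1 * f2 (\<gamma> - \<gamma>1) * \<sigma> \<gamma>1 (\<gamma> - \<gamma>1))"

definition twinv :: "('g::ab_group_add \<Rightarrow> 'g \<Rightarrow> complex) \<Rightarrow> ('g \<Rightarrow> complex) \<Rightarrow> 'g \<Rightarrow> complex" where
  "twinv \<sigma> f \<gamma> = cnj (\<sigma> (- \<gamma>) \<gamma>) * cnj (f (- \<gamma>))"

text \<open>Left sigma-regular representation (applied to finitely supported f).\<close>
definition lambda_tw :: "('g::ab_group_add \<Rightarrow> 'g \<Rightarrow> complex) \<Rightarrow> ('g \<Rightarrow> complex) \<Rightarrow> ('g \<Rightarrow> complex) \<Rightarrow> 'g \<Rightarrow> complex" where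
  "lambda_tw \<sigma> f g \<gamma> = (\<Sum>\<gamma>1\<in>{\<gamma>1. f \<gamma>1 \<noteq> 0}. \<sigma> \<gamma>1 (\<gamma> - \<gamma>1) * f \<gamma>1 * g (\<gamma> - \<gamma>1))"

definition l2 :: "'x set \<Rightarrow> ('x \<Rightarrow> complex) set" where
  "l2 X = {g. (\<forall>x. x \<notin> X \<longrightarrow> g x = 0) \<and> (\<lambda>x. (cmod (g x))\<^sup>2) summable_on X}"

definition l2norm :: "('x \<Rightarrow> complex) \<Rightarrow> real" where
  "l2norm g = sqrt (\<Sum>\<^sub>\<infinity>x. (cmod (g x))\<^sup>2)"

definition l2inner :: "('x \<Rightarrow> complex) \<Rightarrow> ('x \<Rightarrow> complex) \<Rightarrow> complex" where
  "l2inner g h = (\<Sum>\<^sub>\<infinity>x. g x * cnj (h x))"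

definition bounded_op :: "'x set \<Rightarrow> (('x \<Rightarrow> complex) \<Rightarrow> ('x \<Rightarrow> complex)) \<Rightarrow> bool" where
  "bounded_op X T \<longleftrightarrow>
     (\<forall>g\<in>l2 X. T g \<in> l2 X) \<and>
     (\<forall>g\<in>l2 X. \<forall>h\<in>l2 X. T (\<lambda>x. g x + h x) = (\<lambda>x. T g x + T h x)) \<and>
     (\<forall>g\<in>l2 X. \<forall>c. T (\<lambda>x. c * g x) = (\<lambda>x. c * T g x)) \<and>
     (\<exists>C. \<forall>g\<in>l2 X. l2norm (T g) \<le> C * l2norm g)"

definition opnorm :: "'x set \<Rightarrow> (('x \<Rightarrow> complex) \<Rightarrow> ('x \<Rightarrow> complex)) \<Rightarrow> real" where
  "opnorm X T = Sup {l2norm (T g) | g. g \<in> l2 X \<and> l2norm g \<le> 1}"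

definition compact_op :: "'x set \<Rightarrow> (('x \<Rightarrow> complex) \<Rightarrow> ('x \<Rightarrow> complex)) \<Rightarrow> bool" where
  "compact_op X T \<longleftrightarrow>
     (\<forall>\<epsilon>>0. \<exists>F. finite F \<and> F \<subseteq> l2 X \<and>
        (\<forall>g\<in>l2 X. l2norm g \<le> 1 \<longrightarrow> (\<exists>h\<in>F. l2norm (\<lambda>x. T g x - h x) < \<epsilon>)))"

definition dense_in_l2 :: "'x set \<Rightarrow> ('x \<Rightarrow> complex) set \<Rightarrow> bool" where
  "dense_in_l2 X S \<longleftrightarrow> S \<subseteq> l2 X \<and>
     (\<forall>h\<in>l2 X. \<forall>\<epsilon>>0. \<exists>g\<in>S. l2norm (\<lambda>x. h x - g x) < \<epsilon>)"

definition selfadjoint :: "'x set \<Rightarrow> ('x \<Rightarrow> complex) set \<Rightarrow> (('x \<Rightarrow> complex) \<Rightarrow> ('x \<Rightarrow> complex)) \<Rightarrow> bool" where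
  "selfadjoint X Ddom D \<longleftrightarrow>
     dense_in_l2 X Ddom \<and>
     (\<forall>g\<in>Ddom. D g \<in> l2 X) \<and>
     (\<forall>g\<in>Ddom. \<forall>h\<in>Ddom. (\<lambda>x. g x + h x) \<in> Ddom \<and> D (\<lambda>x. g x + h x) = (\<lambda>x. D g x + D h x)) \<and>
     (\<forall>g\<in>Ddom. \<forall>c. (\<lambda>x. c * g x) \<in> Ddom \<and> D (\<lambda>x. c * g x) = (\<lambda>x. c * D g x)) \<and>
     (\<forall>h\<in>l2 X. (\<exists>k\<in>l2 X. \<forall>g\<in>Ddom. l2inner (D g) h = l2inner g k) \<longleftrightarrow> h \<in> Ddom) \<and>
     (\<forall>g\<in>Ddom. \<forall>h\<in>Ddom. l2inner (D g) h = l2inner g (D h))"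

definition compact_resolvent :: "'x set \<Rightarrow> ('x \<Rightarrow> complex) set \<Rightarrow> (('x \<Rightarrow> complex) \<Rightarrow> ('x \<Rightarrow> complex)) \<Rightarrow> bool" where
  "compact_resolvent X Ddom D \<longleftrightarrow>
     (\<exists>R. bounded_op X R \<and>
          (\<forall>g\<in>l2 X. R g \<in> Ddom \<and> (\<lambda>x. D (R g) x - \<i> * R g x) = g) \<and>
          (\<forall>g\<in>Ddom. R (\<lambda>x. D g x - \<i> * g x) = g) \<and>
          compact_op X R)"

definition star_rep :: "('g::ab_group_add \<Rightarrow> 'g \<Rightarrow> complex) \<Rightarrow> 'x set \<Rightarrow>
      (('g \<Rightarrow> complex) \<Rightarrow> ('x \<Rightarrow> complex) \<Rightarrow> ('x \<Rightarrow> complex)) \<Rightarrow> bool" where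
  "star_rep \<sigma> X \<rho> \<longleftrightarrow>
     (\<forall>f\<in>CC. bounded_op X (\<rho> f)) \<and>
     (\<forall>f\<in>CC. \<forall>f'\<in>CC. \<forall>h\<in>l2 X. \<rho> (\<lambda>\<gamma>. f \<gamma> + f' \<gamma>) h = (\<lambda>x. \<rho> f h x + \<rho> f' h x)) \<and>
     (\<forall>f\<in>CC. \<forall>c. \<forall>h\<in>l2 X. \<rho> (\<lambda>\<gamma>. c * f \<gamma>) h = (\<lambda>x. c * \<rho> f h x)) \<and>
     (\<forall>f\<in>CC. \<forall>f'\<in>CC. \<forall>h\<in>l2 X. \<rho> (twconv \<sigma> f f') h = \<rho> f (\<rho> f' h)) \<and>
     (\<forall>f\<in>CC. \<forall>h\<in>l2 X. \<forall>k\<in>l2 X. l2inner (\<rho> (twinv \<sigma> f) h) k = l2inner h (\<rho> f k)) \<and>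
     (\<forall>h\<in>l2 X. \<rho> (delta 0) h = h)"

text \<open>Norm of the enveloping C*-algebra C^*(G,sigma) on C_C(G,sigma): supremum of operator
  norms over all unital *-representations on the separable Hilbert space l2(nat).\<close>
definition univ_norm :: "('g::ab_group_add \<Rightarrow> 'g \<Rightarrow> complex) \<Rightarrow> ('g \<Rightarrow> complex) \<Rightarrow> real" where
  "univ_norm \<sigma> f = Sup {opnorm (UNIV :: nat set) (\<rho> f) | \<rho>. star_rep \<sigma> (UNIV :: nat set) \<rho>}"

definition spectral_triple_tw :: "('g::ab_group_add \<Rightarrow> 'g \<Rightarrow> complex) \<Rightarrow> 'x set \<Rightarrow>
      (('g \<Rightarrow> complex) \<Rightarrow> ('x \<Rightarrow> complex) \<Rightarrow> ('x \<Rightarrow> complex)) \<Rightarrow>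
      ('x \<Rightarrow> complex) set \<Rightarrow> (('x \<Rightarrow> complex) \<Rightarrow> ('x \<Rightarrow> complex)) \<Rightarrow> bool" where
  "spectral_triple_tw \<sigma> X \<pi> Ddom D \<longleftrightarrow>
     star_rep \<sigma> X \<pi> \<and>
     (\<forall>f\<in>CC. opnorm X (\<pi> f) = univ_norm \<sigma> f) \<and>
     selfadjoint X Ddom D \<and>
     compact_resolvent X Ddom D \<and>
     (\<forall>f\<in>CC.
        dense_in_l2 X {g\<in>Ddom. \<pi> f g \<in> Ddom} \<and>
        (\<exists>C. \<forall>g\<in>{g\<in>Ddom. \<pi> f g \<in> Ddom}.
              l2norm (\<lambda>x. D (\<pi> f g) x - \<pi> f (D g) x) \<le> C * l2norm g))"

definition sigma_Z2 :: "real \<Rightarrow> int \<times> int \<Rightarrow> int \<times> int \<Rightarrow> complex" where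
  "sigma_Z2 t z y = cis (pi * t * of_int (fst z * snd y - snd z * fst y))"

definition Gamma_n :: "nat \<Rightarrow> nat \<Rightarrow> (rat \<times> rat) set" where
  "Gamma_n p n = {(of_int a / of_nat p ^ n, of_int b / of_nat p ^ n) | a b. True}"

text \<open>(sigma_theta)_n: restriction of sigma_theta to Gamma_n, using the representations
  q/p^n (k1 = k4 = n) of the coordinates.\<close>
definition sigma_n :: "nat \<Rightarrow> (nat \<Rightarrow> real) \<Rightarrow> nat \<Rightarrow> rat \<times> rat \<Rightarrow> rat \<times> rat \<Rightarrow> complex" where
  "sigma_n p \<theta> n x y =
     cis (2 * pi * \<theta> (2 * n) * of_rat (fst x * of_nat p ^ n) * of_rat (snd y * of_nat p ^ n))"

text \<open>upsilon_n on C_C: the *-isomorphism with delta_(1,0) -> delta_(1/p^n,0),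
  delta_(0,1) -> delta_(0,1/p^n); explicitly delta_(a,b) -> exp(pi i theta_2n a b) delta_(a/p^n,b/p^n).\<close>
definition upsilon :: "nat \<Rightarrow> (nat \<Rightarrow> real) \<Rightarrow> nat \<Rightarrow> (int \<times> int \<Rightarrow> complex) \<Rightarrow> rat \<times> rat \<Rightarrow> complex" where
  "upsilon p \<theta> n f x =
     (if x \<in> Gamma_n p n then
        cis (pi * \<theta> (2 * n) * of_rat (fst x * of_nat p ^ n) * of_rat (snd x * of_nat p ^ n)) *
        f (\<lfloor>fst x * of_nat p ^ n\<rfloor>, \<lfloor>snd x * of_nat p ^ n\<rfloor>)
      else 0)"

definition pi_theta :: "nat \<Rightarrow> (nat \<Rightarrow> real) \<Rightarrow> nat \<Rightarrow> (int \<times> int \<Rightarrow> complex) \<Rightarrow>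
      (rat \<times> rat \<Rightarrow> complex) \<Rightarrow> rat \<times> rat \<Rightarrow> complex" where
  "pi_theta p \<theta> n f = lambda_tw (sigma_n p \<theta> n) (upsilon p \<theta> n f)"

definition padic_abs :: "nat \<Rightarrow> rat \<Rightarrow> real" where
  "padic_abs p r = (if r = 0 then 0 else
     (case quotient_of r of (a, b) \<Rightarrow>
        real p powr (- (real (multiplicity (int p) a) - real (multiplicity (int p) b)))))"

definition Lp :: "nat \<Rightarrow> rat \<Rightarrow> real" where
  "Lp p r = \<bar>of_rat r\<bar> + padic_abs p r"

definition LSigma :: "nat \<Rightarrow> rat \<times> rat \<Rightarrow> real" where
  "LSigma p \<gamma> = Lp p (fst \<gamma>) + Lp p (snd \<gamma>)"

definition mult_dom :: "'x set \<Rightarrow> ('x \<Rightarrow> real) \<Rightarrow> ('x \<Rightarrow> complex) set" where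
  "mult_dom X L = {g \<in> l2 X. (\<lambda>x. complex_of_real (L x) * g x) \<in> l2 X}"

definition mult_op :: "('x \<Rightarrow> real) \<Rightarrow> ('x \<Rightarrow> complex) \<Rightarrow> 'x \<Rightarrow> complex" where
  "mult_op L g = (\<lambda>x. complex_of_real (L x) * g x)"

end

theory Submission
  imports Defs "HOL-Real_Asymp.Real_Asymp"
begin

lemma prod_le_sq: "0 \<le> (a::real) \<Longrightarrow> 0 \<le> b \<Longrightarrow> a * b \<le> a\<^sup>2 + b\<^sup>2"
proof -
  assume "0 \<le> a" "0 \<le> b"
  have "0 \<le> (a - b)\<^sup>2" by simp
  hence "2 * (a * b) \<le> a\<^sup>2 + b\<^sup>2" by (simp add: power2_diff)
  moreover have "0 \<le> a * b" using \<open>0 \<le> a\<close> \<open>0 \<le> b\<close> by simp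
  ultimately show ?thesis by linarith
qed

lemma sum_sq_le: "((a::real) + b)\<^sup>2 \<le> 2 * (a\<^sup>2 + b\<^sup>2)"
proof -
  have "0 \<le> (a - b)\<^sup>2" by simp
  thus ?thesis by (simp add: power2_diff power2_sum)
qed

definition sqs :: "('x \<Rightarrow> complex) \<Rightarrow> bool" where
  "sqs g \<longleftrightarrow> (\<lambda>x. (cmod (g x))\<^sup>2) summable_on UNIV"

definition nsq :: "('x \<Rightarrow> complex) \<Rightarrow> real" where
  "nsq g = (\<Sum>\<^sub>\<infinity>x. (cmod (g x))\<^sup>2)"

lemma nsq_nonneg: "nsq g \<ge> 0"
  unfolding nsq_def by (rule infsum_nonneg) simp

lemma l2norm_nsq: "l2norm g = sqrt (nsq g)"
  unfolding l2norm_def nsq_def ..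

lemma l2norm_nonneg: "l2norm g \<ge> 0"
  by (simp add: l2norm_nsq nsq_nonneg)

lemma l2norm_sq: "(l2norm g)\<^sup>2 = nsq g"
  by (simp add: l2norm_nsq nsq_nonneg)

lemma l2_iff: "g \<in> l2 X \<longleftrightarrow> (\<forall>x. x \<notin> X \<longrightarrow> g x = 0) \<and> sqs g"
proof -
  have "(\<forall>x. x \<notin> X \<longrightarrow> g x = 0) \<Longrightarrow> ((\<lambda>x. (cmod (g x))\<^sup>2) summable_on X \<longleftrightarrow> (\<lambda>x. (cmod (g x))\<^sup>2) summable_on UNIV)"
    by (rule summable_on_cong_neutral) auto
  then show ?thesis unfolding l2_def sqs_def by auto
qed

lemma l2D: "g \<in> l2 X \<Longrightarrow> sqs g" "g \<in> l2 X \<Longrightarrow> x \<notin> X \<Longrightarrow> g x = 0"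
  by (auto simp: l2_iff)

lemma l2I: "sqs g \<Longrightarrow> (\<And>x. x \<notin> X \<Longrightarrow> g x = 0) \<Longrightarrow> g \<in> l2 X"
  by (auto simp: l2_iff)

lemma sqs_compare:
  assumes "sqs v" "\<And>x. cmod (u x) \<le> K * cmod (v x)"
  shows "sqs u" "nsq u \<le> K\<^sup>2 * nsq v"
proof -
  have le: "(cmod (u x))\<^sup>2 \<le> K\<^sup>2 * (cmod (v x))\<^sup>2" for x
  proof -
    have "cmod (u x) \<le> \<bar>K\<bar> * cmod (v x)" using assms(2)[of x]
      by (smt (verit) mult_right_mono norm_ge_zero)
    hence "(cmod (u x))\<^sup>2 \<le> (\<bar>K\<bar> * cmod (v x))\<^sup>2"
      by (intro power_mono) auto
    thus ?thesis by (simp add: power_mult_distrib)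
  qed
  have s: "(\<lambda>x. K\<^sup>2 * (cmod (v x))\<^sup>2) summable_on UNIV"
    using assms(1) unfolding sqs_def by (intro summable_on_cmult_right)
  show su: "sqs u" unfolding sqs_def
    by (rule summable_on_comparison_test[OF s]) (use le in auto)
  have "nsq u \<le> (\<Sum>\<^sub>\<infinity>x. K\<^sup>2 * (cmod (v x))\<^sup>2)"
    unfolding nsq_def using su s le unfolding sqs_def by (intro infsum_mono) auto
  also have "\<dots> = K\<^sup>2 * nsq v" unfolding nsq_def
    by (rule infsum_cmult_right) (use assms(1) sqs_def in auto)
  finally show "nsq u \<le> K\<^sup>2 * nsq v" .
qed

lemma l2norm_compare:
  assumes "sqs v" "\<And>x. cmod (u x) \<le> K * cmod (v x)" "K \<ge> 0"
  shows "l2norm u \<le> K * l2norm v"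
proof -
  have "nsq u \<le> K\<^sup>2 * nsq v" by (rule sqs_compare[OF assms(1,2)])
  hence "sqrt (nsq u) \<le> sqrt (K\<^sup>2 * nsq v)" by simp
  also have "\<dots> = K * sqrt (nsq v)" using assms(3) by (simp add: real_sqrt_mult)
  finally show ?thesis by (simp add: l2norm_nsq)
qed

lemma sqs_prod:
  assumes "sqs g" "sqs h"
  shows "(\<lambda>x. cmod (g x) * cmod (h x)) summable_on UNIV"
proof -
  have s: "(\<lambda>x. (cmod (g x))\<^sup>2 + (cmod (h x))\<^sup>2) summable_on UNIV"
    using assms unfolding sqs_def by (rule summable_on_add)
  show ?thesis
  proof (rule summable_on_comparison_test[OF s])
    fix x
    show "cmod (g x) * cmod (h x) \<le> (cmod (g x))\<^sup>2 + (cmod (h x))\<^sup>2"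
      by (rule prod_le_sq) auto
  qed simp
qed

lemma sqs_add: assumes "sqs g" "sqs h" shows "sqs (\<lambda>x. g x + h x)"
proof -
  have s: "(\<lambda>x. 2 * ((cmod (g x))\<^sup>2 + (cmod (h x))\<^sup>2)) summable_on UNIV"
    using assms unfolding sqs_def by (intro summable_on_cmult_right summable_on_add)
  show ?thesis unfolding sqs_def
  proof (rule summable_on_comparison_test[OF s])
    fix x
    have "cmod (g x + h x) \<le> cmod (g x) + cmod (h x)" by (rule norm_triangle_ineq)
    hence "(cmod (g x + h x))\<^sup>2 \<le> (cmod (g x) + cmod (h x))\<^sup>2" by (intro power_mono) auto
    also have "\<dots> \<le> 2 * ((cmod (g x))\<^sup>2 + (cmod (h x))\<^sup>2)"
      by (rule sum_sq_le)
    finally show "(cmod (g x + h x))\<^sup>2 \<le> 2 * ((cmod (g x))\<^sup>2 + (cmod (h x))\<^sup>2)" .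
  qed simp
qed

lemma sqs_cmult: assumes "sqs g" shows "sqs (\<lambda>x. c * g x)"
  using sqs_compare(1)[OF assms, of "\<lambda>x. c * g x" "cmod c"] by (simp add: norm_mult)

lemma sqs_zero[simp]: "sqs (\<lambda>x. 0)" by (simp add: sqs_def)

lemma nsq_zero[simp]: "nsq (\<lambda>x. 0) = 0" by (simp add: nsq_def)
lemma l2norm_zero[simp]: "l2norm (\<lambda>x. 0) = 0" by (simp add: l2norm_nsq)

lemma sqs_sum: "finite S \<Longrightarrow> (\<And>i. i \<in> S \<Longrightarrow> sqs (F i)) \<Longrightarrow> sqs (\<lambda>x. \<Sum>i\<in>S. F i x)"
  by (induction S rule: finite_induct) (auto intro: sqs_add)

lemma sqs_uminus: "sqs g \<Longrightarrow> sqs (\<lambda>x. - g x)"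
  by (rule sqs_compare(1)[of g _ 1]) auto

lemma sqs_diff: "sqs g \<Longrightarrow> sqs h \<Longrightarrow> sqs (\<lambda>x. g x - h x)"
  using sqs_add[of g "\<lambda>x. - h x"] sqs_uminus[of h] by simp

lemma nsq_cmult: "nsq (\<lambda>x. c * g x) = (cmod c)\<^sup>2 * nsq g"
proof -
  have "nsq (\<lambda>x. c * g x) = (\<Sum>\<^sub>\<infinity>x. (cmod c)\<^sup>2 * (cmod (g x))\<^sup>2)"
    unfolding nsq_def by (simp add: norm_mult power_mult_distrib)
  also have "\<dots> = (cmod c)\<^sup>2 * nsq g" unfolding nsq_def
    by (rule infsum_cmult_right') 
  finally show ?thesis .
qed

lemma l2norm_cmult: "l2norm (\<lambda>x. c * g x) = cmod c * l2norm g"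
  by (simp add: l2norm_nsq nsq_cmult real_sqrt_mult)

lemma cauchy_schwarz_l2:
  assumes "sqs g" "sqs h"
  shows "(\<Sum>\<^sub>\<infinity>x. cmod (g x) * cmod (h x)) \<le> l2norm g * l2norm h"
proof -
  define A where "A = nsq g"
  define B where "B = nsq h"
  have A0: "A \<ge> 0" "B \<ge> 0" by (simp_all add: A_def B_def nsq_nonneg)
  have sp: "(\<lambda>x. cmod (g x) * cmod (h x)) summable_on UNIV" by (rule sqs_prod[OF assms])
  show ?thesis
  proof (cases "A = 0 \<or> B = 0")
    case True
    have "(\<Sum>\<^sub>\<infinity>x. cmod (g x) * cmod (h x)) = 0"
    proof -
      have "cmod (g x) * cmod (h x) = 0" for x
      proof (cases "A = 0")
        case True
        have "(cmod (g x))\<^sup>2 = 0"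
          by (rule nonneg_infsum_le_0D[of "\<lambda>x. (cmod (g x))\<^sup>2" UNIV]) (use True assms(1) in \<open>auto simp: A_def nsq_def sqs_def\<close>)
        thus ?thesis by simp
      next
        case False
        hence "B = 0" using \<open>A = 0 \<or> B = 0\<close> by simp
        have "(cmod (h x))\<^sup>2 = 0"
          by (rule nonneg_infsum_le_0D[of "\<lambda>x. (cmod (h x))\<^sup>2" UNIV]) (use \<open>B = 0\<close> assms(2) in \<open>auto simp: B_def nsq_def sqs_def\<close>)
        thus ?thesis by simp
      qed
      hence "(\<lambda>x. cmod (g x) * cmod (h x)) = (\<lambda>x. 0)" by (intro ext) simp
      thus ?thesis by simp
    qed
    thus ?thesis by (simp add: l2norm_nonneg)
  next
    case False
    hence Ap: "A > 0" "B > 0" using A0 by auto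
    define s where "s = sqrt B / sqrt A"
    define t where "t = inverse s"
    define c :: real where "c = inverse 2"
    have sp0: "s > 0" using Ap by (simp add: s_def)
    have le: "cmod (g x) * cmod (h x) \<le> c * (s * (cmod (g x))\<^sup>2 + t * (cmod (h x))\<^sup>2)" for x
    proof -
      have "0 \<le> (sqrt s * cmod (g x) - cmod (h x) / sqrt s)\<^sup>2" by simp
      also have "\<dots> = s * (cmod (g x))\<^sup>2 + (cmod (h x))\<^sup>2 / s - 2 * cmod (g x) * cmod (h x)"
        using sp0 by (simp add: power2_diff power_divide power_mult_distrib field_simps)
      finally show ?thesis by (simp add: c_def t_def field_simps)
    qed
    have a: "(\<lambda>x. s * (cmod (g x))\<^sup>2) summable_on UNIV"
      using assms(1) unfolding sqs_def by (rule summable_on_cmult_right)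
    have b: "(\<lambda>x. t * (cmod (h x))\<^sup>2) summable_on UNIV"
      using assms(2) unfolding sqs_def by (rule summable_on_cmult_right)
    have s2: "(\<lambda>x. c * (s * (cmod (g x))\<^sup>2 + t * (cmod (h x))\<^sup>2)) summable_on UNIV"
      by (rule summable_on_cmult_right, rule summable_on_add[OF a b])
    have "(\<Sum>\<^sub>\<infinity>x. cmod (g x) * cmod (h x)) \<le> (\<Sum>\<^sub>\<infinity>x. c * (s * (cmod (g x))\<^sup>2 + t * (cmod (h x))\<^sup>2))"
      by (rule infsum_mono[OF sp s2 le])
    also have "\<dots> = c * (s * A + t * B)"
    proof -
      have "(\<Sum>\<^sub>\<infinity>x. c * (s * (cmod (g x))\<^sup>2 + t * (cmod (h x))\<^sup>2))
          = c * (\<Sum>\<^sub>\<infinity>x. (s * (cmod (g x))\<^sup>2 + t * (cmod (h x))\<^sup>2))"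
        by (rule infsum_cmult_right')
      also have "(\<Sum>\<^sub>\<infinity>x. (s * (cmod (g x))\<^sup>2 + t * (cmod (h x))\<^sup>2))
         = (\<Sum>\<^sub>\<infinity>x. s * (cmod (g x))\<^sup>2) + (\<Sum>\<^sub>\<infinity>x. t * (cmod (h x))\<^sup>2)"
        by (rule infsum_add[OF a b])
      also have "(\<Sum>\<^sub>\<infinity>x. s * (cmod (g x))\<^sup>2) = s * A"
        unfolding A_def nsq_def by (rule infsum_cmult_right')
      also have "(\<Sum>\<^sub>\<infinity>x. t * (cmod (h x))\<^sup>2) = t * B"
        unfolding B_def nsq_def by (rule infsum_cmult_right')
      finally show ?thesis .
    qed
    also have "\<dots> = sqrt A * sqrt B"
    proof -
      have a: "sqrt A * sqrt A = A" "sqrt B * sqrt B = B" using Ap by simp_all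
      have p: "sqrt A > 0" "sqrt B > 0" using Ap by simp_all
      have "s * A = sqrt A * sqrt B" unfolding s_def using p a(1)
        by (metis (no_types, opaque_lifting) mult.commute nonzero_mult_div_cancel_left order_less_irrefl times_divide_eq_right)
      moreover have "t * B = sqrt A * sqrt B" unfolding t_def s_def using p a(2)
        by (simp add: field_simps)
      ultimately show ?thesis by (simp add: c_def)
    qed
    also have "\<dots> = l2norm g * l2norm h" by (simp add: A_def B_def l2norm_nsq)
    finally show ?thesis .
  qed
qed

lemma l2norm_triangle:
  assumes "sqs g" "sqs h"
  shows "l2norm (\<lambda>x. g x + h x) \<le> l2norm g + l2norm h"
proof -
  have sgh: "sqs (\<lambda>x. g x + h x)" by (rule sqs_add[OF assms])
  have sp: "(\<lambda>x. cmod (g x) * cmod (h x)) summable_on UNIV" by (rule sqs_prod[OF assms])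
  have le: "(cmod (g x + h x))\<^sup>2 \<le> (cmod (g x))\<^sup>2 + (cmod (h x))\<^sup>2 + 2 * (cmod (g x) * cmod (h x))" for x
  proof -
    have "(cmod (g x + h x))\<^sup>2 \<le> (cmod (g x) + cmod (h x))\<^sup>2"
      by (intro power_mono norm_triangle_ineq) auto
    thus ?thesis by (simp add: power2_sum)
  qed
  have "nsq (\<lambda>x. g x + h x) \<le> (\<Sum>\<^sub>\<infinity>x. (cmod (g x))\<^sup>2 + (cmod (h x))\<^sup>2 + 2 * (cmod (g x) * cmod (h x)))"
    unfolding nsq_def using sgh assms sp unfolding sqs_def
    by (intro infsum_mono le summable_on_add summable_on_cmult_right) auto
  also have "\<dots> = nsq g + nsq h + 2 * (\<Sum>\<^sub>\<infinity>x. cmod (g x) * cmod (h x))"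
    unfolding nsq_def using assms sp unfolding sqs_def
    by (simp add: infsum_add summable_on_add summable_on_cmult_right infsum_cmult_right')
  also have "\<dots> \<le> nsq g + nsq h + 2 * (l2norm g * l2norm h)"
    using cauchy_schwarz_l2[OF assms] by simp
  also have "\<dots> = (l2norm g + l2norm h)\<^sup>2"
    by (simp add: power2_sum l2norm_sq)
  finally have "sqrt (nsq (\<lambda>x. g x + h x)) \<le> sqrt ((l2norm g + l2norm h)\<^sup>2)" by (rule real_sqrt_le_mono)
  thus ?thesis using l2norm_nonneg[of g] l2norm_nonneg[of h] by (simp add: l2norm_nsq[symmetric])
qed

lemma l2norm_sum:
  "finite S \<Longrightarrow> (\<And>i. i \<in> S \<Longrightarrow> sqs (F i)) \<Longrightarrow> l2norm (\<lambda>x. \<Sum>i\<in>S. F i x) \<le> (\<Sum>i\<in>S. l2norm (F i))"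
proof (induction S rule: finite_induct)
  case (insert a S)
  have "l2norm (\<lambda>x. \<Sum>i\<in>insert a S. F i x) = l2norm (\<lambda>x. F a x + (\<Sum>i\<in>S. F i x))"
    using insert by simp
  also have "\<dots> \<le> l2norm (F a) + l2norm (\<lambda>x. \<Sum>i\<in>S. F i x)"
    using insert by (intro l2norm_triangle sqs_sum) auto
  also have "\<dots> \<le> l2norm (F a) + (\<Sum>i\<in>S. l2norm (F i))" using insert by simp
  finally show ?case using insert by simp
qed simp

lemma l2norm_diff_sym: "l2norm (\<lambda>x. g x - h x) = l2norm (\<lambda>x. h x - g x)"
  unfolding l2norm_nsq nsq_def by (simp add: norm_minus_commute)

lemma coord_le_l2norm:
  assumes "sqs g" shows "cmod (g x) \<le> l2norm g"
proof -
  have "(cmod (g x))\<^sup>2 = sum (\<lambda>x. (cmod (g x))\<^sup>2) {x}" by simp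
  also have "\<dots> \<le> nsq g" unfolding nsq_def
    by (rule finite_sum_le_infsum) (use assms in \<open>auto simp: sqs_def\<close>)
  finally have "sqrt ((cmod (g x))\<^sup>2) \<le> sqrt (nsq g)" by (rule real_sqrt_le_mono)
  thus ?thesis by (simp add: l2norm_nsq)
qed


definition NN :: "nat \<Rightarrow> nat \<Rightarrow> rat" where "NN p n = of_nat p ^ n"

definition emb :: "nat \<Rightarrow> nat \<Rightarrow> int \<times> int \<Rightarrow> rat \<times> rat" where
  "emb p n z = (of_int (fst z) / NN p n, of_int (snd z) / NN p n)"

definition ipt :: "nat \<Rightarrow> nat \<Rightarrow> rat \<times> rat \<Rightarrow> int \<times> int" where
  "ipt p n x = (\<lfloor>fst x * NN p n\<rfloor>, \<lfloor>snd x * NN p n\<rfloor>)"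

lemma NN_pos: "p > 0 \<Longrightarrow> NN p n > 0" by (simp add: NN_def)

lemma Gamma_emb: "Gamma_n p n = range (emb p n)"
proof (intro set_eqI iffI)
  fix x assume "x \<in> Gamma_n p n"
  then obtain a b where "x = (of_int a / of_nat p ^ n, of_int b / of_nat p ^ n)"
    by (auto simp: Gamma_n_def)
  thus "x \<in> range (emb p n)" by (intro range_eqI[of _ _ "(a,b)"]) (simp add: emb_def NN_def)
next
  fix x assume "x \<in> range (emb p n)"
  thus "x \<in> Gamma_n p n" by (auto simp: Gamma_n_def emb_def NN_def)
qed

lemma emb_in[simp]: "emb p n z \<in> Gamma_n p n" by (simp add: Gamma_emb)

lemma emb_mult: "p > 0 \<Longrightarrow> fst (emb p n z) * NN p n = of_int (fst z)"
  "p > 0 \<Longrightarrow> snd (emb p n z) * NN p n = of_int (snd z)"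
  using NN_pos[of p n] by (auto simp: emb_def)

lemma ipt_emb[simp]: "p > 0 \<Longrightarrow> ipt p n (emb p n z) = z"
  by (simp add: ipt_def emb_mult)

lemma emb_ipt: "p > 0 \<Longrightarrow> x \<in> Gamma_n p n \<Longrightarrow> emb p n (ipt p n x) = x"
  by (auto simp: Gamma_emb)

lemma emb_add: "emb p n (z + w) = emb p n z + emb p n w"
  by (simp add: emb_def add_divide_distrib)

lemma emb_diff: "emb p n (z - w) = emb p n z - emb p n w"
  by (simp add: emb_def diff_divide_distrib)

lemma emb_uminus: "emb p n (- z) = - emb p n z"
  by (simp add: emb_def)

lemma emb_zero[simp]: "emb p n 0 = 0"
  by (simp add: emb_def zero_prod_def)

lemma emb_inj: "p > 0 \<Longrightarrow> inj (emb p n)"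
  by (metis injI ipt_emb)

lemma emb_eq_iff[simp]: "p > 0 \<Longrightarrow> emb p n z = emb p n w \<longleftrightarrow> z = w"
  using emb_inj[of p n] by (auto dest: injD)

lemma Gamma_diff_iff: "x - emb p n z \<in> Gamma_n p n \<longleftrightarrow> x \<in> Gamma_n p n"
proof
  assume "x - emb p n z \<in> Gamma_n p n"
  then obtain w where "x - emb p n z = emb p n w" by (auto simp: Gamma_emb)
  hence "x = emb p n (w + z)" by (simp add: emb_add algebra_simps)
  thus "x \<in> Gamma_n p n" by simp
next
  assume "x \<in> Gamma_n p n"
  then obtain w where "x = emb p n w" by (auto simp: Gamma_emb)
  hence "x - emb p n z = emb p n (w - z)" by (simp add: emb_diff)
  thus "x - emb p n z \<in> Gamma_n p n" by simp
qed

lemma Gamma_add_iff: "x + emb p n z \<in> Gamma_n p n \<longleftrightarrow> x \<in> Gamma_n p n"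
  using Gamma_diff_iff[of x p n "-z"] by (simp add: emb_uminus)

definition ph :: "nat \<Rightarrow> (nat \<Rightarrow> real) \<Rightarrow> nat \<Rightarrow> int \<times> int \<Rightarrow> rat \<times> rat \<Rightarrow> complex" where
  "ph p \<theta> n z \<gamma> = sigma_n p \<theta> n (emb p n z) (\<gamma> - emb p n z) *
      cis (pi * \<theta> (2 * n) * of_int (fst z) * of_int (snd z))"

definition Uop :: "nat \<Rightarrow> (nat \<Rightarrow> real) \<Rightarrow> nat \<Rightarrow> int \<times> int \<Rightarrow> (rat \<times> rat \<Rightarrow> complex) \<Rightarrow> rat \<times> rat \<Rightarrow> complex" where
  "Uop p \<theta> n z g = (\<lambda>\<gamma>. ph p \<theta> n z \<gamma> * g (\<gamma> - emb p n z))"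

lemma ph_emb:
  assumes "p > 0"
  shows "ph p \<theta> n z (emb p n v) =
    cis (pi * \<theta> (2 * n) * (2 * of_int (fst z) * of_int (snd v) - of_int (fst z) * of_int (snd z)))"
proof -
  have a: "of_rat (fst (emb p n z) * of_nat p ^ n) = (of_int (fst z) :: real)"
    using emb_mult(1)[OF assms, of n z] by (simp add: NN_def)
  have b: "of_rat (snd (emb p n v - emb p n z) * of_nat p ^ n) = (of_int (snd v) - of_int (snd z) :: real)"
    using emb_mult(2)[OF assms, of n "v - z"] by (simp add: NN_def emb_diff[symmetric] of_rat_diff)
  show ?thesis
    unfolding ph_def sigma_n_def a b cis_mult
    by (rule arg_cong[where f = cis]) (simp add: algebra_simps)
qed

lemma norm_ph[simp]: "cmod (ph p \<theta> n z \<gamma>) = 1"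
  by (simp add: ph_def sigma_n_def norm_mult)

lemma upsilon_emb:
  assumes "p > 0"
  shows "upsilon p \<theta> n f (emb p n z) = cis (pi * \<theta> (2 * n) * of_int (fst z) * of_int (snd z)) * f z"
proof -
  have a: "fst (emb p n z) * of_nat p ^ n = of_int (fst z)" "snd (emb p n z) * of_nat p ^ n = of_int (snd z)"
    using emb_mult[OF assms, of n z] by (simp_all add: NN_def)
  show ?thesis unfolding upsilon_def a by simp
qed

lemma upsilon_supp:
  assumes "p > 0"
  shows "{x. upsilon p \<theta> n f x \<noteq> 0} = emb p n ` {z. f z \<noteq> 0}"
proof (intro set_eqI iffI)
  fix x assume x: "x \<in> {x. upsilon p \<theta> n f x \<noteq> 0}"
  hence "x \<in> Gamma_n p n" by (auto simp: upsilon_def split: if_splits)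
  hence xe: "x = emb p n (ipt p n x)" using emb_ipt[OF assms] by simp
  hence "f (ipt p n x) \<noteq> 0" using x upsilon_emb[OF assms, of \<theta> n f "ipt p n x"] by auto
  thus "x \<in> emb p n ` {z. f z \<noteq> 0}" using xe by blast
next
  fix x assume "x \<in> emb p n ` {z. f z \<noteq> 0}"
  then obtain z where "x = emb p n z" "f z \<noteq> 0" by auto
  thus "x \<in> {x. upsilon p \<theta> n f x \<noteq> 0}" using upsilon_emb[OF assms, of \<theta> n f z] by simp
qed

lemma pi_expand:
  assumes "p > 0" "finite S" "{z. f z \<noteq> 0} \<subseteq> S"
  shows "pi_theta p \<theta> n f g \<gamma> = (\<Sum>z\<in>S. f z * Uop p \<theta> n z g \<gamma>)"
proof -
  have inj: "inj_on (emb p n) {z. f z \<noteq> 0}" using emb_inj[OF assms(1)] by (auto intro: inj_on_subset)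
  have "pi_theta p \<theta> n f g \<gamma> = (\<Sum>\<gamma>1\<in>emb p n ` {z. f z \<noteq> 0}.
          sigma_n p \<theta> n \<gamma>1 (\<gamma> - \<gamma>1) * upsilon p \<theta> n f \<gamma>1 * g (\<gamma> - \<gamma>1))"
    unfolding pi_theta_def lambda_tw_def upsilon_supp[OF assms(1)] ..
  also have "\<dots> = (\<Sum>z\<in>{z. f z \<noteq> 0}. sigma_n p \<theta> n (emb p n z) (\<gamma> - emb p n z) *
          upsilon p \<theta> n f (emb p n z) * g (\<gamma> - emb p n z))"
    by (rule sum.reindex[OF inj, unfolded comp_def])
  also have "\<dots> = (\<Sum>z\<in>{z. f z \<noteq> 0}. f z * Uop p \<theta> n z g \<gamma>)"
    by (rule sum.cong) (simp_all add: upsilon_emb[OF assms(1)] Uop_def ph_def)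
  also have "\<dots> = (\<Sum>z\<in>S. f z * Uop p \<theta> n z g \<gamma>)"
    by (rule sum.mono_neutral_left) (use assms in auto)
  finally show ?thesis .
qed

lemma shift_sqs:
  fixes g :: "'a::ab_group_add \<Rightarrow> complex"
  assumes "\<And>x. cmod (c x) = 1"
  shows "sqs (\<lambda>x. c x * g (x - a)) \<longleftrightarrow> sqs g"
    and "nsq (\<lambda>x. c x * g (x - a)) = nsq g"
proof -
  have e: "(cmod (c x * g (x - a)))\<^sup>2 = (cmod (g (x - a)))\<^sup>2" for x by (simp add: norm_mult assms)
  show "sqs (\<lambda>x. c x * g (x - a)) \<longleftrightarrow> sqs g" unfolding sqs_def e
    by (rule summable_on_reindex_bij_witness[of UNIV "\<lambda>x. x + a" "\<lambda>x. x - a"]) auto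
  show "nsq (\<lambda>x. c x * g (x - a)) = nsq g" unfolding nsq_def e
    by (rule infsum_reindex_bij_witness[of UNIV "\<lambda>x. x + a" "\<lambda>x. x - a"]) auto
qed

lemma Uop_l2:
  assumes "p > 0" "g \<in> l2 (Gamma_n p n)"
  shows "Uop p \<theta> n z g \<in> l2 (Gamma_n p n)" "nsq (Uop p \<theta> n z g) = nsq g"
proof -
  show "nsq (Uop p \<theta> n z g) = nsq g" unfolding Uop_def by (rule shift_sqs(2)) simp
  have "sqs (Uop p \<theta> n z g)" unfolding Uop_def using shift_sqs(1)[of "ph p \<theta> n z" g] l2D(1)[OF assms(2)] by simp
  moreover have "Uop p \<theta> n z g x = 0" if "x \<notin> Gamma_n p n" for x
    using that l2D(2)[OF assms(2), of "x - emb p n z"] Gamma_diff_iff[of x p n z] by (simp add: Uop_def)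
  ultimately show "Uop p \<theta> n z g \<in> l2 (Gamma_n p n)" by (rule l2I)
qed

lemma Uop_comp:
  assumes "p > 0" "g \<in> l2 (Gamma_n p n)"
  shows "Uop p \<theta> n z (Uop p \<theta> n w g) = (\<lambda>\<gamma>. sigma_Z2 (\<theta> (2 * n)) z w * Uop p \<theta> n (z + w) g \<gamma>)"
proof
  fix \<gamma>
  show "Uop p \<theta> n z (Uop p \<theta> n w g) \<gamma> = sigma_Z2 (\<theta> (2 * n)) z w * Uop p \<theta> n (z + w) g \<gamma>"
  proof (cases "\<gamma> \<in> Gamma_n p n")
    case False
    hence "\<gamma> - emb p n z - emb p n w \<notin> Gamma_n p n" by (simp add: Gamma_diff_iff)
    hence "g (\<gamma> - emb p n z - emb p n w) = 0" using l2D(2)[OF assms(2)] by blast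
    thus ?thesis by (simp add: Uop_def emb_add diff_diff_eq)
  next
    case True
    then obtain v where v: "\<gamma> = emb p n v" by (auto simp: Gamma_emb)
    have e1: "emb p n v - emb p n z = emb p n (v - z)" by (simp add: emb_diff)
    have e2: "emb p n v - emb p n (z + w) = emb p n v - emb p n z - emb p n w" by (simp add: emb_add)
    show ?thesis
      unfolding Uop_def v e1 e2 ph_emb[OF assms(1)] sigma_Z2_def
      by (simp add: cis_mult emb_diff algebra_simps)
  qed
qed

lemma Uop_zero: "p > 0 \<Longrightarrow> Uop p \<theta> n 0 g = g"
  by (simp add: Uop_def ph_def sigma_n_def)


lemma inner_summable:
  assumes "sqs g" "sqs h"
  shows "(\<lambda>x. g x * cnj (h x)) summable_on UNIV"
proof -
  have "(\<lambda>x. norm (g x * cnj (h x))) summable_on UNIV"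
    using sqs_prod[OF assms] by (simp add: norm_mult)
  thus ?thesis using summable_on_iff_abs_summable_on_complex by blast
qed

lemma l2inner_add_left:
  assumes "sqs g" "sqs g'" "sqs h"
  shows "l2inner (\<lambda>x. g x + g' x) h = l2inner g h + l2inner g' h"
  unfolding l2inner_def distrib_right
  by (rule infsum_add) (use inner_summable assms in auto)

lemma l2inner_add_right:
  assumes "sqs g" "sqs h" "sqs h'"
  shows "l2inner g (\<lambda>x. h x + h' x) = l2inner g h + l2inner g h'"
  unfolding l2inner_def complex_cnj_add distrib_left
  by (rule infsum_add) (use inner_summable assms in auto)

lemma l2inner_cmult_left: "l2inner (\<lambda>x. c * g x) h = c * l2inner g h"
  unfolding l2inner_def mult.assoc by (rule infsum_cmult_right')

lemma l2inner_cmult_right: "l2inner g (\<lambda>x. c * h x) = cnj c * l2inner g h"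
proof -
  have "l2inner g (\<lambda>x. c * h x) = (\<Sum>\<^sub>\<infinity>x. cnj c * (g x * cnj (h x)))"
    unfolding l2inner_def by (simp add: mult_ac)
  also have "\<dots> = cnj c * l2inner g h" unfolding l2inner_def by (rule infsum_cmult_right')
  finally show ?thesis .
qed

lemma l2inner_sum_left:
  "finite S \<Longrightarrow> (\<And>i. i \<in> S \<Longrightarrow> sqs (F i)) \<Longrightarrow> sqs h \<Longrightarrow>
   l2inner (\<lambda>x. \<Sum>i\<in>S. F i x) h = (\<Sum>i\<in>S. l2inner (F i) h)"
proof (induction S rule: finite_induct)
  case empty thus ?case by (simp add: l2inner_def)
next
  case (insert a S)
  have "l2inner (\<lambda>x. \<Sum>i\<in>insert a S. F i x) h = l2inner (\<lambda>x. F a x + (\<Sum>i\<in>S. F i x)) h"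
    using insert by simp
  also have "\<dots> = l2inner (F a) h + l2inner (\<lambda>x. \<Sum>i\<in>S. F i x) h"
    using insert by (intro l2inner_add_left sqs_sum) auto
  finally show ?case using insert by simp
qed

lemma l2inner_sum_right:
  "finite S \<Longrightarrow> (\<And>i. i \<in> S \<Longrightarrow> sqs (F i)) \<Longrightarrow> sqs h \<Longrightarrow>
   l2inner h (\<lambda>x. \<Sum>i\<in>S. F i x) = (\<Sum>i\<in>S. l2inner h (F i))"
proof (induction S rule: finite_induct)
  case empty thus ?case by (simp add: l2inner_def)
next
  case (insert a S)
  have "l2inner h (\<lambda>x. \<Sum>i\<in>insert a S. F i x) = l2inner h (\<lambda>x. F a x + (\<Sum>i\<in>S. F i x))"
    using insert by simp
  also have "\<dots> = l2inner h (F a) + l2inner h (\<lambda>x. \<Sum>i\<in>S. F i x)"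
    using insert by (intro l2inner_add_right sqs_sum) auto
  finally show ?case using insert by simp
qed

lemma l2inner_self:
  assumes "sqs g" shows "l2inner g g = complex_of_real (nsq g)"
proof -
  have "((\<lambda>x. (cmod (g x))\<^sup>2) has_sum nsq g) UNIV"
    using assms unfolding sqs_def nsq_def by simp
  hence "((\<lambda>x. complex_of_real ((cmod (g x))\<^sup>2)) has_sum complex_of_real (nsq g)) UNIV"
    by (rule has_sum_of_real)
  hence "((\<lambda>x. g x * cnj (g x)) has_sum complex_of_real (nsq g)) UNIV"
    by (simp only: complex_norm_square)
  thus ?thesis unfolding l2inner_def by (rule infsumI)
qed

lemma Uop_adj:
  assumes "p > 0" "h \<in> l2 (Gamma_n p n)" "k \<in> l2 (Gamma_n p n)"
  shows "l2inner (Uop p \<theta> n (- z) h) k = l2inner h (Uop p \<theta> n z k)"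
proof -
  define a where "a = emb p n z"
  have "l2inner (Uop p \<theta> n (- z) h) k = (\<Sum>\<^sub>\<infinity>x. ph p \<theta> n (- z) x * h (x + a) * cnj (k x))"
    unfolding l2inner_def Uop_def a_def emb_uminus by simp
  also have "\<dots> = (\<Sum>\<^sub>\<infinity>y. ph p \<theta> n (- z) (y - a) * h y * cnj (k (y - a)))"
    by (rule infsum_reindex_bij_witness[of UNIV "\<lambda>y. y - a" "\<lambda>x. x + a"]) auto
  also have "\<dots> = (\<Sum>\<^sub>\<infinity>y. h y * cnj (ph p \<theta> n z y * k (y - a)))"
  proof (rule infsum_cong)
    fix y
    show "ph p \<theta> n (- z) (y - a) * h y * cnj (k (y - a)) = h y * cnj (ph p \<theta> n z y * k (y - a))"
    proof (cases "y \<in> Gamma_n p n")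
      case False
      thus ?thesis using l2D(2)[OF assms(2) False] by simp
    next
      case True
      then obtain v where v: "y = emb p n v" by (auto simp: Gamma_emb)
      have e: "y - a = emb p n (v - z)" by (simp add: v a_def emb_diff)
      have "ph p \<theta> n (- z) (y - a) = cnj (ph p \<theta> n z y)"
        unfolding e unfolding v ph_emb[OF assms(1)] cis_cnj
        by (rule arg_cong[where f = cis]) (simp add: algebra_simps)
      thus ?thesis by (simp add: mult_ac)
    qed
  qed
  also have "\<dots> = l2inner h (Uop p \<theta> n z k)"
    unfolding l2inner_def Uop_def a_def ..
  finally show ?thesis .
qed


lemma CC_finite: "f \<in> CC \<Longrightarrow> finite {z. f z \<noteq> 0}" by (simp add: CC_def)

lemma Uop_add: "Uop p \<theta> n z (\<lambda>x. g x + h x) = (\<lambda>\<gamma>. Uop p \<theta> n z g \<gamma> + Uop p \<theta> n z h \<gamma>)"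
  by (simp add: Uop_def distrib_left)

lemma Uop_cmult: "Uop p \<theta> n z (\<lambda>x. c * g x) = (\<lambda>\<gamma>. c * Uop p \<theta> n z g \<gamma>)"
  by (simp add: Uop_def mult_ac)

lemma Uop_sum: "Uop p \<theta> n z (\<lambda>x. \<Sum>w\<in>B. F w x) = (\<lambda>\<gamma>. \<Sum>w\<in>B. Uop p \<theta> n z (F w) \<gamma>)"
  by (simp add: Uop_def sum_distrib_left)

context
  fixes p :: nat and \<theta> :: "nat \<Rightarrow> real" and n :: nat
  assumes p0: "p > 0"
begin

lemma PI_sum: "finite S \<Longrightarrow> {z. f z \<noteq> 0} \<subseteq> S \<Longrightarrow>
  pi_theta p \<theta> n f g = (\<lambda>\<gamma>. \<Sum>z\<in>S. f z * Uop p \<theta> n z g \<gamma>)"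
  using pi_expand[OF p0] by blast

lemma PI_sumC: "f \<in> CC \<Longrightarrow> pi_theta p \<theta> n f g = (\<lambda>\<gamma>. \<Sum>z\<in>{z. f z \<noteq> 0}. f z * Uop p \<theta> n z g \<gamma>)"
  by (rule PI_sum) (auto simp: CC_def)

lemma sum_Uop_l2:
  assumes "finite S" "g \<in> l2 (Gamma_n p n)"
  shows "(\<lambda>\<gamma>. \<Sum>z\<in>S. f z * Uop p \<theta> n z g \<gamma>) \<in> l2 (Gamma_n p n)"
    "l2norm (\<lambda>\<gamma>. \<Sum>z\<in>S. f z * Uop p \<theta> n z g \<gamma>) \<le> (\<Sum>z\<in>S. cmod (f z)) * l2norm g"
proof -
  have U: "Uop p \<theta> n z g \<in> l2 (Gamma_n p n)" for z using Uop_l2[OF p0 assms(2)] by blast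
  have s: "sqs (\<lambda>\<gamma>. f z * Uop p \<theta> n z g \<gamma>)" for z by (rule sqs_cmult, rule l2D(1)[OF U])
  show "(\<lambda>\<gamma>. \<Sum>z\<in>S. f z * Uop p \<theta> n z g \<gamma>) \<in> l2 (Gamma_n p n)"
  proof (rule l2I)
    show "sqs (\<lambda>\<gamma>. \<Sum>z\<in>S. f z * Uop p \<theta> n z g \<gamma>)" by (rule sqs_sum[OF assms(1) s])
  next
    fix x assume "x \<notin> Gamma_n p n"
    thus "(\<Sum>z\<in>S. f z * Uop p \<theta> n z g x) = 0" using l2D(2)[OF U] by simp
  qed
  have "l2norm (\<lambda>\<gamma>. \<Sum>z\<in>S. f z * Uop p \<theta> n z g \<gamma>) \<le> (\<Sum>z\<in>S. l2norm (\<lambda>\<gamma>. f z * Uop p \<theta> n z g \<gamma>))"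
    by (rule l2norm_sum[OF assms(1) s])
  also have "\<dots> = (\<Sum>z\<in>S. cmod (f z) * l2norm g)"
    by (rule sum.cong) (simp_all add: l2norm_cmult l2norm_nsq Uop_l2(2)[OF p0 assms(2)])
  finally show "l2norm (\<lambda>\<gamma>. \<Sum>z\<in>S. f z * Uop p \<theta> n z g \<gamma>) \<le> (\<Sum>z\<in>S. cmod (f z)) * l2norm g"
    by (simp add: sum_distrib_right)
qed

lemma sum_Uop_add:
  "(\<lambda>\<gamma>. \<Sum>z\<in>S. f z * Uop p \<theta> n z (\<lambda>x. g x + h x) \<gamma>) =
   (\<lambda>x. (\<lambda>\<gamma>. \<Sum>z\<in>S. f z * Uop p \<theta> n z g \<gamma>) x + (\<lambda>\<gamma>. \<Sum>z\<in>S. f z * Uop p \<theta> n z h \<gamma>) x)"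
  by (simp add: Uop_add distrib_left sum.distrib)

lemma sum_Uop_cmult:
  "(\<lambda>\<gamma>. \<Sum>z\<in>S. f z * Uop p \<theta> n z (\<lambda>x. c * g x) \<gamma>) =
   (\<lambda>x. c * (\<lambda>\<gamma>. \<Sum>z\<in>S. f z * Uop p \<theta> n z g \<gamma>) x)"
  by (simp add: Uop_cmult sum_distrib_left mult_ac)

lemma PI_bounded: "f \<in> CC \<Longrightarrow> bounded_op (Gamma_n p n) (pi_theta p \<theta> n f)"
  unfolding bounded_op_def PI_sumC
  using sum_Uop_l2[OF CC_finite] sum_Uop_add sum_Uop_cmult by blast

lemma PI_bound: "f \<in> CC \<Longrightarrow> g \<in> l2 (Gamma_n p n) \<Longrightarrow>
  l2norm (pi_theta p \<theta> n f g) \<le> (\<Sum>z\<in>{z. f z \<noteq> 0}. cmod (f z)) * l2norm g"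
  unfolding PI_sumC using sum_Uop_l2[OF CC_finite] by blast

lemma PI_l2: "f \<in> CC \<Longrightarrow> g \<in> l2 (Gamma_n p n) \<Longrightarrow> pi_theta p \<theta> n f g \<in> l2 (Gamma_n p n)"
  unfolding PI_sumC using sum_Uop_l2[OF CC_finite] by blast

lemma delta_supp: "{z. delta w z \<noteq> 0} = {w}"
  by (auto simp: delta_def)

lemma PI_delta: "pi_theta p \<theta> n (delta w) = Uop p \<theta> n w"
proof -
  have "pi_theta p \<theta> n (delta w) g = (\<lambda>\<gamma>. \<Sum>z\<in>{w}. delta w z * Uop p \<theta> n z g \<gamma>)" for g
    by (rule PI_sum) (auto simp: delta_def)
  thus ?thesis by (auto simp: delta_def)
qed

lemma twconv_supp:
  assumes "finite A" "finite B" "{z. f z \<noteq> 0} \<subseteq> A" "{z. f' z \<noteq> 0} \<subseteq> B"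
  shows "{z. twconv \<sigma> f f' z \<noteq> 0} \<subseteq> (\<lambda>(a,b). a + b) ` (A \<times> B)"
proof
  fix u assume "u \<in> {z. twconv \<sigma> f f' z \<noteq> 0}"
  hence "(\<Sum>\<gamma>1\<in>{\<gamma>1. f \<gamma>1 \<noteq> 0}. f \<gamma>1 * f' (u - \<gamma>1) * \<sigma> \<gamma>1 (u - \<gamma>1)) \<noteq> 0"
    by (simp add: twconv_def)
  then obtain z where "z \<in> {\<gamma>1. f \<gamma>1 \<noteq> 0}" "f z * f' (u - z) * \<sigma> z (u - z) \<noteq> 0"
    by (rule sum.not_neutral_contains_not_neutral)
  hence "f z \<noteq> 0" "f' (u - z) \<noteq> 0" by auto
  hence "z \<in> A" "u - z \<in> B" using assms by auto
  thus "u \<in> (\<lambda>(a,b). a + b) ` (A \<times> B)" by (force intro: image_eqI[of _ _ "(z, u - z)"])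
qed

lemma PI_twconv:
  assumes f: "f \<in> CC" and f': "f' \<in> CC" and h: "h \<in> l2 (Gamma_n p n)"
  shows "pi_theta p \<theta> n (twconv (sigma_Z2 (\<theta> (2 * n))) f f') h = pi_theta p \<theta> n f (pi_theta p \<theta> n f' h)"
proof
  fix \<gamma>
  define \<sigma> where "\<sigma> = sigma_Z2 (\<theta> (2 * n))"
  define A where "A = {z. f z \<noteq> 0}"
  define B where "B = {z. f' z \<noteq> 0}"
  define C where "C = (\<lambda>(a,b). a + b) ` (A \<times> B)"
  have fA: "finite A" "finite B" using f f' by (auto simp: A_def B_def CC_def)
  hence fC: "finite C" by (simp add: C_def)
  have suppC: "{z. twconv \<sigma> f f' z \<noteq> 0} \<subseteq> C"
    unfolding C_def by (rule twconv_supp) (use fA in \<open>auto simp: A_def B_def\<close>)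
  have U: "Uop p \<theta> n w h \<in> l2 (Gamma_n p n)" for w using Uop_l2[OF p0 h] by blast
  have "pi_theta p \<theta> n (twconv \<sigma> f f') h \<gamma> = (\<Sum>u\<in>C. twconv \<sigma> f f' u * Uop p \<theta> n u h \<gamma>)"
    using PI_sum[OF fC suppC] by simp
  also have "\<dots> = (\<Sum>u\<in>C. \<Sum>z\<in>A. f z * f' (u - z) * \<sigma> z (u - z) * Uop p \<theta> n u h \<gamma>)"
    unfolding twconv_def A_def[symmetric] by (simp add: sum_distrib_right)
  also have "\<dots> = (\<Sum>z\<in>A. \<Sum>u\<in>C. f z * f' (u - z) * \<sigma> z (u - z) * Uop p \<theta> n u h \<gamma>)"
    by (rule sum.swap)
  also have "\<dots> = (\<Sum>z\<in>A. \<Sum>w\<in>B. f z * f' w * \<sigma> z w * Uop p \<theta> n (z + w) h \<gamma>)"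
  proof (rule sum.cong[OF refl])
    fix z assume zA: "z \<in> A"
    have inj: "inj_on (\<lambda>w. z + w) B" by (auto intro: inj_onI)
    have sub: "(\<lambda>w. z + w) ` B \<subseteq> C" using zA by (auto simp: C_def)
    have "(\<Sum>u\<in>C. f z * f' (u - z) * \<sigma> z (u - z) * Uop p \<theta> n u h \<gamma>)
        = (\<Sum>u\<in>(\<lambda>w. z + w) ` B. f z * f' (u - z) * \<sigma> z (u - z) * Uop p \<theta> n u h \<gamma>)"
    proof (rule sum.mono_neutral_right[OF fC sub])
      show "\<forall>u\<in>C - (\<lambda>w. z + w) ` B. f z * f' (u - z) * \<sigma> z (u - z) * Uop p \<theta> n u h \<gamma> = 0"
      proof
        fix u assume "u \<in> C - (\<lambda>w. z + w) ` B"
        hence "u - z \<notin> B" by (metis DiffD2 add.commute diff_add_cancel image_eqI)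
        thus "f z * f' (u - z) * \<sigma> z (u - z) * Uop p \<theta> n u h \<gamma> = 0" by (simp add: B_def)
      qed
    qed
    also have "\<dots> = (\<Sum>w\<in>B. f z * f' w * \<sigma> z w * Uop p \<theta> n (z + w) h \<gamma>)"
      by (subst sum.reindex[OF inj]) simp
    finally show "(\<Sum>u\<in>C. f z * f' (u - z) * \<sigma> z (u - z) * Uop p \<theta> n u h \<gamma>)
        = (\<Sum>w\<in>B. f z * f' w * \<sigma> z w * Uop p \<theta> n (z + w) h \<gamma>)" .
  qed
  also have "\<dots> = (\<Sum>z\<in>A. f z * Uop p \<theta> n z (\<lambda>x. \<Sum>w\<in>B. f' w * Uop p \<theta> n w h x) \<gamma>)"
  proof (rule sum.cong[OF refl])
    fix z
    have "Uop p \<theta> n z (\<lambda>x. \<Sum>w\<in>B. f' w * Uop p \<theta> n w h x) \<gamma>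
        = (\<Sum>w\<in>B. f' w * Uop p \<theta> n z (Uop p \<theta> n w h) \<gamma>)"
      by (simp add: Uop_sum Uop_cmult)
    also have "\<dots> = (\<Sum>w\<in>B. f' w * (\<sigma> z w * Uop p \<theta> n (z + w) h \<gamma>))"
      by (simp add: Uop_comp[OF p0 h] \<sigma>_def)
    finally show "(\<Sum>w\<in>B. f z * f' w * \<sigma> z w * Uop p \<theta> n (z + w) h \<gamma>)
        = f z * Uop p \<theta> n z (\<lambda>x. \<Sum>w\<in>B. f' w * Uop p \<theta> n w h x) \<gamma>"
      by (simp add: sum_distrib_left mult_ac)
  qed
  also have "\<dots> = pi_theta p \<theta> n f (pi_theta p \<theta> n f' h) \<gamma>"
    using PI_sumC[OF f] PI_sumC[OF f'] by (simp add: A_def B_def)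
  finally show "pi_theta p \<theta> n (twconv (sigma_Z2 (\<theta> (2 * n))) f f') h \<gamma> = pi_theta p \<theta> n f (pi_theta p \<theta> n f' h) \<gamma>"
    by (simp add: \<sigma>_def)
qed

end


lemma sigma_Z2_neg_self: "sigma_Z2 t (- z) z = 1"
  by (simp add: sigma_Z2_def algebra_simps)

lemma twinv_Z2: "twinv (sigma_Z2 t) f = (\<lambda>\<gamma>. cnj (f (- \<gamma>)))"
  by (rule ext) (simp add: twinv_def sigma_Z2_neg_self)

context
  fixes p :: nat and \<theta> :: "nat \<Rightarrow> real" and n :: nat
  assumes p0: "p > 0"
begin

lemma PI_twinv:
  assumes f: "f \<in> CC" and h: "h \<in> l2 (Gamma_n p n)" and k: "k \<in> l2 (Gamma_n p n)"
  shows "l2inner (pi_theta p \<theta> n (twinv (sigma_Z2 (\<theta> (2 * n))) f) h) k = l2inner h (pi_theta p \<theta> n f k)"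
proof -
  define A where "A = {z. f z \<noteq> 0}"
  have fA: "finite A" using f by (simp add: A_def CC_def)
  have U: "\<And>w g. g \<in> l2 (Gamma_n p n) \<Longrightarrow> sqs (Uop p \<theta> n w g)" using Uop_l2[OF p0] l2D(1) by blast
  have "pi_theta p \<theta> n (twinv (sigma_Z2 (\<theta> (2 * n))) f) h
      = (\<lambda>\<gamma>. \<Sum>u\<in>uminus ` A. cnj (f (- u)) * Uop p \<theta> n u h \<gamma>)"
    unfolding twinv_Z2 by (rule PI_sum[OF p0]) (use fA in \<open>auto simp: A_def image_iff\<close>, force)
  also have "\<dots> = (\<lambda>\<gamma>. \<Sum>z\<in>A. cnj (f z) * Uop p \<theta> n (- z) h \<gamma>)"
    by (subst sum.reindex) (auto intro: inj_onI)
  finally have e: "pi_theta p \<theta> n (twinv (sigma_Z2 (\<theta> (2 * n))) f) h = (\<lambda>\<gamma>. \<Sum>z\<in>A. cnj (f z) * Uop p \<theta> n (- z) h \<gamma>)" .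
  have "l2inner (\<lambda>\<gamma>. \<Sum>z\<in>A. cnj (f z) * Uop p \<theta> n (- z) h \<gamma>) k
      = (\<Sum>z\<in>A. l2inner (\<lambda>\<gamma>. cnj (f z) * Uop p \<theta> n (- z) h \<gamma>) k)"
    by (rule l2inner_sum_left[OF fA]) (use U h k l2D(1) in \<open>auto intro: sqs_cmult\<close>)
  also have "\<dots> = (\<Sum>z\<in>A. cnj (f z) * l2inner h (Uop p \<theta> n z k))"
    by (simp add: l2inner_cmult_left Uop_adj[OF p0 h k])
  also have "\<dots> = (\<Sum>z\<in>A. l2inner h (\<lambda>\<gamma>. f z * Uop p \<theta> n z k \<gamma>))"
    by (simp add: l2inner_cmult_right)
  also have "\<dots> = l2inner h (\<lambda>\<gamma>. \<Sum>z\<in>A. f z * Uop p \<theta> n z k \<gamma>)"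
    by (rule l2inner_sum_right[OF fA, symmetric]) (use U h k l2D(1) in \<open>auto intro: sqs_cmult\<close>)
  also have "\<dots> = l2inner h (pi_theta p \<theta> n f k)"
    using PI_sumC[OF p0 f] by (simp add: A_def)
  finally show ?thesis using e by simp
qed

lemma PI_star_rep: "star_rep (sigma_Z2 (\<theta> (2 * n))) (Gamma_n p n) (pi_theta p \<theta> n)"
  unfolding star_rep_def
proof (intro conjI ballI allI)
  fix f :: "int \<times> int \<Rightarrow> complex" assume "f \<in> CC" thus "bounded_op (Gamma_n p n) (pi_theta p \<theta> n f)" by (rule PI_bounded[OF p0])
next
  fix f f' :: "int \<times> int \<Rightarrow> complex" and h assume f: "f \<in> CC" and f': "f' \<in> CC" and h: "h \<in> l2 (Gamma_n p n)"
  define S where "S = {z. f z \<noteq> 0} \<union> {z. f' z \<noteq> 0}"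
  have fS: "finite S" using f f' by (simp add: S_def CC_def)
  have "pi_theta p \<theta> n (\<lambda>\<gamma>. f \<gamma> + f' \<gamma>) h = (\<lambda>\<gamma>. \<Sum>z\<in>S. (f z + f' z) * Uop p \<theta> n z h \<gamma>)"
    by (rule PI_sum[OF p0 fS]) (auto simp: S_def)
  moreover have "pi_theta p \<theta> n f h = (\<lambda>\<gamma>. \<Sum>z\<in>S. f z * Uop p \<theta> n z h \<gamma>)"
    by (rule PI_sum[OF p0 fS]) (auto simp: S_def)
  moreover have "pi_theta p \<theta> n f' h = (\<lambda>\<gamma>. \<Sum>z\<in>S. f' z * Uop p \<theta> n z h \<gamma>)"
    by (rule PI_sum[OF p0 fS]) (auto simp: S_def)
  ultimately show "pi_theta p \<theta> n (\<lambda>\<gamma>. f \<gamma> + f' \<gamma>) h = (\<lambda>x. pi_theta p \<theta> n f h x + pi_theta p \<theta> n f' h x)"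
    by (simp add: distrib_right sum.distrib)
next
  fix f :: "int \<times> int \<Rightarrow> complex" and c h assume f: "f \<in> CC" and h: "h \<in> l2 (Gamma_n p n)"
  define S where "S = {z. f z \<noteq> 0}"
  have fS: "finite S" using f by (simp add: S_def CC_def)
  have "pi_theta p \<theta> n (\<lambda>\<gamma>. c * f \<gamma>) h = (\<lambda>\<gamma>. \<Sum>z\<in>S. (c * f z) * Uop p \<theta> n z h \<gamma>)"
    by (rule PI_sum[OF p0 fS]) (auto simp: S_def)
  moreover have "pi_theta p \<theta> n f h = (\<lambda>\<gamma>. \<Sum>z\<in>S. f z * Uop p \<theta> n z h \<gamma>)"
    by (rule PI_sum[OF p0 fS]) (auto simp: S_def)
  ultimately show "pi_theta p \<theta> n (\<lambda>\<gamma>. c * f \<gamma>) h = (\<lambda>x. c * pi_theta p \<theta> n f h x)"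
    by (simp add: sum_distrib_left mult_ac)
next
  fix f f' :: "int \<times> int \<Rightarrow> complex" and h assume f: "f \<in> CC" and f': "f' \<in> CC" and h: "h \<in> l2 (Gamma_n p n)"
  show "pi_theta p \<theta> n (twconv (sigma_Z2 (\<theta> (2 * n))) f f') h = pi_theta p \<theta> n f (pi_theta p \<theta> n f' h)"
    by (rule PI_twconv[OF p0 f f' h])
next
  fix f :: "int \<times> int \<Rightarrow> complex" and h k assume "f \<in> CC" "h \<in> l2 (Gamma_n p n)" "k \<in> l2 (Gamma_n p n)"
  thus "l2inner (pi_theta p \<theta> n (twinv (sigma_Z2 (\<theta> (2 * n))) f) h) k = l2inner h (pi_theta p \<theta> n f k)"
    by (rule PI_twinv)
next
  fix h assume "h \<in> l2 (Gamma_n p n)"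
  show "pi_theta p \<theta> n (delta 0) h = h" by (simp add: PI_delta[OF p0] Uop_zero[OF p0])
qed

end


lemma l2_zero[simp]: "(\<lambda>x. 0) \<in> l2 X" by (simp add: l2_iff)

lemma l2_add: "g \<in> l2 X \<Longrightarrow> h \<in> l2 X \<Longrightarrow> (\<lambda>x. g x + h x) \<in> l2 X"
  by (auto simp: l2_iff intro: sqs_add)

lemma l2_cmult: "g \<in> l2 X \<Longrightarrow> (\<lambda>x. c * g x) \<in> l2 X"
  by (auto simp: l2_iff intro: sqs_cmult)

lemma l2_diff: "g \<in> l2 X \<Longrightarrow> h \<in> l2 X \<Longrightarrow> (\<lambda>x. g x - h x) \<in> l2 X"
  by (auto simp: l2_iff intro: sqs_diff)

lemma l2_sum: "finite S \<Longrightarrow> (\<And>i. i \<in> S \<Longrightarrow> F i \<in> l2 X) \<Longrightarrow> (\<lambda>x. \<Sum>i\<in>S. F i x) \<in> l2 X"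
  by (induction S rule: finite_induct) (auto intro: l2_add)

lemma nsq_zero_imp:
  assumes "sqs g" "nsq g = 0" shows "g = (\<lambda>x. 0)"
proof
  fix x
  have "(cmod (g x))\<^sup>2 = 0"
    by (rule nonneg_infsum_le_0D[of "\<lambda>x. (cmod (g x))\<^sup>2" UNIV]) (use assms in \<open>auto simp: nsq_def sqs_def\<close>)
  thus "g x = 0" by simp
qed

lemma bounded_op_zero:
  assumes "bounded_op X T" shows "T (\<lambda>x. 0) = (\<lambda>x. 0)"
proof -
  have "\<forall>g\<in>l2 X. \<forall>c. T (\<lambda>x. c * g x) = (\<lambda>x. c * T g x)"
    using assms unfolding bounded_op_def by blast
  from this[rule_format, OF l2_zero[of X], of 0] show ?thesis by simp
qed

lemma opnorm_bound:
  assumes T: "bounded_op X T" and g: "g \<in> l2 X"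
  shows "l2norm (T g) \<le> opnorm X T * l2norm g"
proof -
  define Q where "Q = {l2norm (T g) | g. g \<in> l2 X \<and> l2norm g \<le> 1}"
  obtain C where C: "\<And>g. g \<in> l2 X \<Longrightarrow> l2norm (T g) \<le> C * l2norm g"
    using T unfolding bounded_op_def by blast
  have bdd: "bdd_above Q"
  proof (rule bdd_aboveI)
    fix q assume "q \<in> Q"
    then obtain g where g: "g \<in> l2 X" "l2norm g \<le> 1" "q = l2norm (T g)" by (auto simp: Q_def)
    have "q \<le> C * l2norm g" using C g by simp
    also have "\<dots> \<le> \<bar>C\<bar> * l2norm g" by (intro mult_right_mono) (auto simp: l2norm_nonneg)
    also have "\<dots> \<le> \<bar>C\<bar> * 1" using g by (intro mult_left_mono) auto
    finally show "q \<le> \<bar>C\<bar>" by simp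
  qed
  show ?thesis
  proof (cases "l2norm g = 0")
    case True
    hence "nsq g = 0" by (simp add: l2norm_nsq nsq_nonneg)
    hence "g = (\<lambda>x. 0)" using nsq_zero_imp l2D(1)[OF g] by blast
    thus ?thesis using bounded_op_zero[OF T] by simp
  next
    case False
    hence gp: "l2norm g > 0" using l2norm_nonneg[of g] by simp
    define c where "c = complex_of_real (1 / l2norm g)"
    have g': "(\<lambda>x. c * g x) \<in> l2 X" by (rule l2_cmult[OF g])
    have n': "l2norm (\<lambda>x. c * g x) = 1" using gp unfolding l2norm_cmult by (simp add: c_def norm_divide)
    have "T (\<lambda>x. c * g x) = (\<lambda>x. c * T g x)" using T g unfolding bounded_op_def by blast
    hence "l2norm (\<lambda>x. c * T g x) \<in> Q" using g' n' unfolding Q_def by force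
    hence "l2norm (\<lambda>x. c * T g x) \<le> Sup Q" by (rule cSup_upper[OF _ bdd])
    hence "l2norm (T g) / l2norm g \<le> opnorm X T"
      using gp unfolding l2norm_cmult by (simp add: c_def norm_divide opnorm_def Q_def)
    thus ?thesis using gp by (simp add: divide_le_eq mult.commute)
  qed
qed

lemma opnorm_le:
  assumes "\<And>g. g \<in> l2 X \<Longrightarrow> l2norm (T g) \<le> M * l2norm g" "M \<ge> 0"
  shows "opnorm X T \<le> M"
  unfolding opnorm_def
proof (rule cSup_least)
  have "l2norm (T (\<lambda>x. 0)) \<in> {l2norm (T g) |g. g \<in> l2 X \<and> l2norm g \<le> 1}"
    by (rule CollectI, rule exI[of _ "\<lambda>x. 0"]) simp
  thus "{l2norm (T g) |g. g \<in> l2 X \<and> l2norm g \<le> 1} \<noteq> {}" by auto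
next
  fix q assume "q \<in> {l2norm (T g) |g. g \<in> l2 X \<and> l2norm g \<le> 1}"
  then obtain g where g: "g \<in> l2 X" "l2norm g \<le> 1" "q = l2norm (T g)" by auto
  have "q \<le> M * l2norm g" using assms(1) g by simp
  also have "\<dots> \<le> M * 1" using g assms(2) by (intro mult_left_mono) auto
  finally show "q \<le> M" by simp
qed

lemma opnorm_nonneg:
  assumes "bounded_op X T" shows "opnorm X T \<ge> 0"
proof -
  show ?thesis
  proof -
    have bdd: "bdd_above {l2norm (T g) |g. g \<in> l2 X \<and> l2norm g \<le> 1}"
    proof -
      obtain C where C: "\<And>g. g \<in> l2 X \<Longrightarrow> l2norm (T g) \<le> C * l2norm g"
        using assms unfolding bounded_op_def by blast
      show ?thesis
      proof (rule bdd_aboveI)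
        fix q assume "q \<in> {l2norm (T g) |g. g \<in> l2 X \<and> l2norm g \<le> 1}"
        then obtain g where g: "g \<in> l2 X" "l2norm g \<le> 1" "q = l2norm (T g)" by auto
        have "q \<le> C * l2norm g" using C g by simp
        also have "\<dots> \<le> \<bar>C\<bar> * l2norm g" by (intro mult_right_mono) (auto simp: l2norm_nonneg)
        also have "\<dots> \<le> \<bar>C\<bar> * 1" using g by (intro mult_left_mono) auto
        finally show "q \<le> \<bar>C\<bar>" by simp
      qed
    qed
    have "l2norm (T (\<lambda>x. 0)) \<in> {l2norm (T g) |g. g \<in> l2 X \<and> l2norm g \<le> 1}"
      by (rule CollectI, rule exI[of _ "\<lambda>x. 0"]) simp
    hence "l2norm (T (\<lambda>x. 0)) \<le> opnorm X T" unfolding opnorm_def by (rule cSup_upper[OF _ bdd])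
    thus ?thesis using l2norm_nonneg[of "T (\<lambda>x. 0)"] by linarith
  qed
qed

lemma delta_supp': "{z. delta w z \<noteq> 0} = {w}"
  by (auto simp: delta_def)

lemma delta_CC[simp]: "delta z \<in> CC"
  by (simp add: CC_def delta_def)

lemma CC_sum_delta: "finite S \<Longrightarrow> (\<lambda>\<gamma>. \<Sum>z\<in>S. c z * delta z \<gamma>) \<in> CC"
proof -
  assume "finite S"
  have "{\<gamma>. (\<Sum>z\<in>S. c z * delta z \<gamma>) \<noteq> 0} \<subseteq> S"
  proof
    fix \<gamma> assume "\<gamma> \<in> {\<gamma>. (\<Sum>z\<in>S. c z * delta z \<gamma>) \<noteq> 0}"
    then obtain z where "z \<in> S" "c z * delta z \<gamma> \<noteq> 0"
      by (auto elim: sum.not_neutral_contains_not_neutral)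
    thus "\<gamma> \<in> S" by (auto simp: delta_def split: if_splits)
  qed
  thus ?thesis using \<open>finite S\<close> by (auto simp: CC_def intro: finite_subset)
qed

lemma CC_expand: "f \<in> CC \<Longrightarrow> f = (\<lambda>\<gamma>. \<Sum>z\<in>{z. f z \<noteq> 0}. f z * delta z \<gamma>)"
proof
  fix \<gamma> assume f: "f \<in> CC"
  show "f \<gamma> = (\<Sum>z\<in>{z. f z \<noteq> 0}. f z * delta z \<gamma>)"
  proof (cases "f \<gamma> = 0")
    case True
    thus ?thesis by (auto simp: delta_def intro!: sum.neutral)
  next
    case False
    have "(\<Sum>z\<in>{z. f z \<noteq> 0}. f z * delta z \<gamma>) = (\<Sum>z\<in>{\<gamma>}. f z * delta z \<gamma>)"
      by (rule sum.mono_neutral_right) (use f False in \<open>auto simp: CC_def delta_def\<close>)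
    thus ?thesis by (simp add: delta_def)
  qed
qed

context
  fixes t :: real and X :: "'x set" and \<rho>
  assumes sr: "star_rep (sigma_Z2 t) X \<rho>"
begin

lemma SR_bounded: "f \<in> CC \<Longrightarrow> bounded_op X (\<rho> f)"
  using sr unfolding star_rep_def by blast

lemma SR_l2: "f \<in> CC \<Longrightarrow> h \<in> l2 X \<Longrightarrow> \<rho> f h \<in> l2 X"
  using SR_bounded unfolding bounded_op_def by blast

lemma SR_zero: "h \<in> l2 X \<Longrightarrow> \<rho> (\<lambda>\<gamma>. 0) h = (\<lambda>x. 0)"
proof -
  assume h: "h \<in> l2 X"
  have "\<rho> (\<lambda>\<gamma>. 0 * delta 0 \<gamma>) h = (\<lambda>x. 0 * \<rho> (delta 0) h x)"
    using sr h unfolding star_rep_def by (meson delta_CC)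
  thus ?thesis by simp
qed

lemma SR_sum:
  assumes "finite S" "h \<in> l2 X"
  shows "\<rho> (\<lambda>\<gamma>. \<Sum>z\<in>S. c z * delta z \<gamma>) h = (\<lambda>x. \<Sum>z\<in>S. c z * \<rho> (delta z) h x)"
  using assms(1)
proof (induction S rule: finite_induct)
  case empty thus ?case using SR_zero[OF assms(2)] by simp
next
  case (insert a S)
  have add: "\<rho> (\<lambda>\<gamma>. f \<gamma> + f' \<gamma>) h = (\<lambda>x. \<rho> f h x + \<rho> f' h x)" if "f \<in> CC" "f' \<in> CC" for f f'
    using sr that assms(2) unfolding star_rep_def by blast
  have cm: "\<rho> (\<lambda>\<gamma>. c * f \<gamma>) h = (\<lambda>x. c * \<rho> f h x)" if "f \<in> CC" for f c
    using sr that assms(2) unfolding star_rep_def by blast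
  have "\<rho> (\<lambda>\<gamma>. \<Sum>z\<in>insert a S. c z * delta z \<gamma>) h
      = \<rho> (\<lambda>\<gamma>. (\<lambda>\<gamma>. c a * delta a \<gamma>) \<gamma> + (\<lambda>\<gamma>. \<Sum>z\<in>S. c z * delta z \<gamma>) \<gamma>) h"
    using insert by simp
  also have "\<dots> = (\<lambda>x. \<rho> (\<lambda>\<gamma>. c a * delta a \<gamma>) h x + \<rho> (\<lambda>\<gamma>. \<Sum>z\<in>S. c z * delta z \<gamma>) h x)"
  proof (rule add)
    show "(\<lambda>\<gamma>. c a * delta a \<gamma>) \<in> CC" using CC_sum_delta[of "{a}" c] by simp
    show "(\<lambda>\<gamma>. \<Sum>z\<in>S. c z * delta z \<gamma>) \<in> CC" using CC_sum_delta insert by blast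
  qed
  also have "\<dots> = (\<lambda>x. \<Sum>z\<in>insert a S. c z * \<rho> (delta z) h x)"
    using insert cm[OF delta_CC] by simp
  finally show ?case .
qed

lemma SR_expand: "f \<in> CC \<Longrightarrow> h \<in> l2 X \<Longrightarrow> \<rho> f h = (\<lambda>x. \<Sum>z\<in>{z. f z \<noteq> 0}. f z * \<rho> (delta z) h x)"
  by (subst CC_expand, assumption, rule SR_sum) (auto simp: CC_def)

lemma twconv_delta: "twconv (sigma_Z2 t) (delta z) (delta w) = (\<lambda>\<gamma>. sigma_Z2 t z w * delta (z + w) \<gamma>)"
proof
  fix \<gamma>
  have "twconv (sigma_Z2 t) (delta z) (delta w) \<gamma> = (\<Sum>\<gamma>1\<in>{z}. delta z \<gamma>1 * delta w (\<gamma> - \<gamma>1) * sigma_Z2 t \<gamma>1 (\<gamma> - \<gamma>1))"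
    unfolding twconv_def delta_supp' ..
  also have "\<dots> = sigma_Z2 t z w * delta (z + w) \<gamma>"
    by (auto simp: delta_def algebra_simps)
  finally show "twconv (sigma_Z2 t) (delta z) (delta w) \<gamma> = sigma_Z2 t z w * delta (z + w) \<gamma>" .
qed

lemma SR_comp: "h \<in> l2 X \<Longrightarrow> \<rho> (delta z) (\<rho> (delta w) h) = (\<lambda>x. sigma_Z2 t z w * \<rho> (delta (z + w)) h x)"
proof -
  assume h: "h \<in> l2 X"
  have "\<rho> (delta z) (\<rho> (delta w) h) = \<rho> (twconv (sigma_Z2 t) (delta z) (delta w)) h"
    using sr h unfolding star_rep_def by (metis delta_CC)
  also have "\<dots> = \<rho> (\<lambda>\<gamma>. sigma_Z2 t z w * delta (z + w) \<gamma>) h" by (simp add: twconv_delta)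
  also have "\<dots> = (\<lambda>x. sigma_Z2 t z w * \<rho> (delta (z + w)) h x)"
    using sr h unfolding star_rep_def by (meson delta_CC)
  finally show ?thesis .
qed

lemma SR_unit: "h \<in> l2 X \<Longrightarrow> \<rho> (delta 0) h = h"
  using sr unfolding star_rep_def by blast

lemma twinv_delta: "twinv (sigma_Z2 t) (delta (- z)) = delta z"
  by (rule ext) (auto simp: twinv_Z2 delta_def)

lemma SR_iso: "h \<in> l2 X \<Longrightarrow> nsq (\<rho> (delta z) h) = nsq h"
proof -
  assume h: "h \<in> l2 X"
  have Vh: "\<rho> (delta z) h \<in> l2 X" by (rule SR_l2[OF delta_CC h])
  have "l2inner (\<rho> (twinv (sigma_Z2 t) (delta (- z))) h) (\<rho> (delta z) h) = l2inner h (\<rho> (delta (- z)) (\<rho> (delta z) h))"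
    using sr h Vh unfolding star_rep_def by (meson delta_CC)
  hence "l2inner (\<rho> (delta z) h) (\<rho> (delta z) h) = l2inner h (\<lambda>x. sigma_Z2 t (- z) z * \<rho> (delta (- z + z)) h x)"
    by (simp add: twinv_delta SR_comp[OF h])
  also have "\<dots> = l2inner h h" by (simp add: sigma_Z2_neg_self SR_unit[OF h])
  finally have "complex_of_real (nsq (\<rho> (delta z) h)) = complex_of_real (nsq h)"
    using l2inner_self l2D(1) Vh h by metis
  thus ?thesis by simp
qed

lemma SR_lin_sum:
  assumes "f \<in> CC" "finite S" "\<And>i. i \<in> S \<Longrightarrow> F i \<in> l2 X"
  shows "\<rho> f (\<lambda>x. \<Sum>i\<in>S. F i x) = (\<lambda>x. \<Sum>i\<in>S. \<rho> f (F i) x)"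
  using assms(2,3)
proof (induction S rule: finite_induct)
  case empty thus ?case using bounded_op_zero[OF SR_bounded[OF assms(1)]] by simp
next
  case (insert a S)
  have "\<rho> f (\<lambda>x. \<Sum>i\<in>insert a S. F i x) = \<rho> f (\<lambda>x. F a x + (\<lambda>x. \<Sum>i\<in>S. F i x) x)"
    using insert by simp
  also have "\<dots> = (\<lambda>x. \<rho> f (F a) x + \<rho> f (\<lambda>x. \<Sum>i\<in>S. F i x) x)"
    using SR_bounded[OF assms(1)] insert l2_sum[of S F X] unfolding bounded_op_def by simp
  finally show ?case using insert by simp
qed

lemma SR_cmult: "f \<in> CC \<Longrightarrow> g \<in> l2 X \<Longrightarrow> \<rho> f (\<lambda>x. c * g x) = (\<lambda>x. c * \<rho> f g x)"
  using SR_bounded unfolding bounded_op_def by blast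

end


lemma infsum_finite_supp:
  assumes "finite S" "\<And>x. x \<notin> S \<Longrightarrow> F x = 0"
  shows "infsum F UNIV = sum F S" "F summable_on UNIV"
proof -
  have "infsum F UNIV = infsum F S" by (rule infsum_cong_neutral) (use assms in auto)
  thus "infsum F UNIV = sum F S" using assms by simp
  have "F summable_on UNIV \<longleftrightarrow> F summable_on S" by (rule summable_on_cong_neutral) (use assms in auto)
  thus "F summable_on UNIV" using assms by simp
qed

lemma infsum_sum_swap:
  fixes G :: "'i \<Rightarrow> 'k \<Rightarrow> real"
  assumes "finite S" "\<And>y. y \<in> S \<Longrightarrow> G y summable_on UNIV"
  shows "(\<Sum>\<^sub>\<infinity>k. \<Sum>y\<in>S. G y k) = (\<Sum>y\<in>S. \<Sum>\<^sub>\<infinity>k. G y k)"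
    and "(\<lambda>k. \<Sum>y\<in>S. G y k) summable_on UNIV"
proof -
  have "((\<Sum>\<^sub>\<infinity>k. \<Sum>y\<in>S. G y k) = (\<Sum>y\<in>S. \<Sum>\<^sub>\<infinity>k. G y k)) \<and> (\<lambda>k. \<Sum>y\<in>S. G y k) summable_on UNIV"
    using assms
  proof (induction S rule: finite_induct)
    case (insert a S)
    have s1: "G a summable_on UNIV" using insert by simp
    have s2: "(\<lambda>k. \<Sum>y\<in>S. G y k) summable_on UNIV" using insert by simp
    have "(\<Sum>\<^sub>\<infinity>k. \<Sum>y\<in>insert a S. G y k) = (\<Sum>\<^sub>\<infinity>k. G a k + (\<Sum>y\<in>S. G y k))"
      using insert by simp
    also have "\<dots> = (\<Sum>\<^sub>\<infinity>k. G a k) + (\<Sum>\<^sub>\<infinity>k. \<Sum>y\<in>S. G y k)" by (rule infsum_add[OF s1 s2])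
    finally have "(\<Sum>\<^sub>\<infinity>k. \<Sum>y\<in>insert a S. G y k) = (\<Sum>y\<in>insert a S. \<Sum>\<^sub>\<infinity>k. G y k)"
      using insert by simp
    moreover have "(\<lambda>k. \<Sum>y\<in>insert a S. G y k) summable_on UNIV"
      using summable_on_add[OF s1 s2] insert by simp
    ultimately show ?case by blast
  qed simp
  thus "(\<Sum>\<^sub>\<infinity>k. \<Sum>y\<in>S. G y k) = (\<Sum>y\<in>S. \<Sum>\<^sub>\<infinity>k. G y k)" "(\<lambda>k. \<Sum>y\<in>S. G y k) summable_on UNIV"
    by blast+
qed

definition sqbox :: "int \<Rightarrow> (int \<times> int) set" where "sqbox m = {-m..m} \<times> {-m..m}"

lemma finite_sqbox[simp]: "finite (sqbox m)" by (simp add: sqbox_def)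

lemma card_sqbox: "m \<ge> 0 \<Longrightarrow> real (card (sqbox m)) = (2 * real_of_int m + 1)\<^sup>2"
  by (simp add: sqbox_def card_cartesian_product power2_eq_square)

definition ck :: "nat \<Rightarrow> (nat \<Rightarrow> real) \<Rightarrow> nat \<Rightarrow> ((int \<times> int \<Rightarrow> complex) \<Rightarrow> (nat \<Rightarrow> complex) \<Rightarrow> nat \<Rightarrow> complex)
   \<Rightarrow> (nat \<Rightarrow> complex) \<Rightarrow> (int \<times> int) set \<Rightarrow> nat \<Rightarrow> rat \<times> rat \<Rightarrow> complex" where
  "ck p \<theta> n \<rho> \<xi> F k \<gamma> = (if \<gamma> \<in> Gamma_n p n \<and> ipt p n \<gamma> \<in> F then
      cis (pi * \<theta> (2 * n) * of_int (fst (ipt p n \<gamma>)) * of_int (snd (ipt p n \<gamma>))) * \<rho> (delta (- ipt p n \<gamma>)) \<xi> k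
    else 0)"

context
  fixes p :: nat and \<theta> :: "nat \<Rightarrow> real" and n :: nat and \<rho> and \<xi> :: "nat \<Rightarrow> complex"
  assumes p0: "p > 0"
    and sr: "star_rep (sigma_Z2 (\<theta> (2 * n))) (UNIV :: nat set) \<rho>"
    and \<xi>: "\<xi> \<in> l2 (UNIV :: nat set)"
begin

lemma ck_emb: "ck p \<theta> n \<rho> \<xi> F k (emb p n x) = (if x \<in> F then
      cis (pi * \<theta> (2 * n) * of_int (fst x) * of_int (snd x)) * \<rho> (delta (- x)) \<xi> k else 0)"
  by (simp add: ck_def p0)

lemma ck_supp: "\<gamma> \<notin> emb p n ` F \<Longrightarrow> ck p \<theta> n \<rho> \<xi> F k \<gamma> = 0"
  unfolding ck_def using emb_ipt[OF p0] by (metis image_eqI)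

lemma ck_l2:
  assumes "finite F"
  shows "ck p \<theta> n \<rho> \<xi> F k \<in> l2 (Gamma_n p n)"
    "nsq (ck p \<theta> n \<rho> \<xi> F k) = (\<Sum>x\<in>F. (cmod (\<rho> (delta (- x)) \<xi> k))\<^sup>2)"
proof -
  have fin: "finite (emb p n ` F)" using assms by simp
  have z: "\<And>\<gamma>. \<gamma> \<notin> emb p n ` F \<Longrightarrow> (cmod (ck p \<theta> n \<rho> \<xi> F k \<gamma>))\<^sup>2 = 0" using ck_supp by simp
  show "ck p \<theta> n \<rho> \<xi> F k \<in> l2 (Gamma_n p n)"
  proof (rule l2I)
    show "sqs (ck p \<theta> n \<rho> \<xi> F k)" unfolding sqs_def by (rule infsum_finite_supp(2)[OF fin z])
  next
    fix x assume "x \<notin> Gamma_n p n" thus "ck p \<theta> n \<rho> \<xi> F k x = 0" by (simp add: ck_def)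
  qed
  have inj: "inj_on (emb p n) F" using emb_inj[OF p0] by (auto intro: inj_on_subset)
  have "nsq (ck p \<theta> n \<rho> \<xi> F k) = (\<Sum>\<gamma>\<in>emb p n ` F. (cmod (ck p \<theta> n \<rho> \<xi> F k \<gamma>))\<^sup>2)"
    unfolding nsq_def by (rule infsum_finite_supp(1)[OF fin z])
  also have "\<dots> = (\<Sum>x\<in>F. (cmod (ck p \<theta> n \<rho> \<xi> F k (emb p n x)))\<^sup>2)"
    by (rule sum.reindex[OF inj, unfolded comp_def])
  also have "\<dots> = (\<Sum>x\<in>F. (cmod (\<rho> (delta (- x)) \<xi> k))\<^sup>2)"
    by (rule sum.cong) (simp_all add: ck_emb norm_mult)
  finally show "nsq (ck p \<theta> n \<rho> \<xi> F k) = (\<Sum>x\<in>F. (cmod (\<rho> (delta (- x)) \<xi> k))\<^sup>2)" .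
qed

lemma V_shift_expand:
  assumes f: "f \<in> CC"
  shows "\<rho> (delta (- y)) (\<rho> f \<xi>) = (\<lambda>k. \<Sum>z\<in>{z. f z \<noteq> 0}.
           f z * sigma_Z2 (\<theta> (2 * n)) (- y) z * \<rho> (delta (- y + z)) \<xi> k)"
proof -
  define A where "A = {z. f z \<noteq> 0}"
  have fA: "finite A" using f by (simp add: A_def CC_def)
  have l2V: "\<And>z. (\<lambda>x. f z * \<rho> (delta z) \<xi> x) \<in> l2 UNIV"
    by (rule l2_cmult, rule SR_l2[OF sr delta_CC \<xi>])
  have "\<rho> (delta (- y)) (\<rho> f \<xi>) = \<rho> (delta (- y)) (\<lambda>k. \<Sum>z\<in>A. (\<lambda>x. f z * \<rho> (delta z) \<xi> x) k)"
    using SR_expand[OF sr f \<xi>] by (simp add: A_def)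
  also have "\<dots> = (\<lambda>k. \<Sum>z\<in>A. \<rho> (delta (- y)) (\<lambda>x. f z * \<rho> (delta z) \<xi> x) k)"
    by (rule SR_lin_sum[OF sr delta_CC fA l2V])
  also have "\<dots> = (\<lambda>k. \<Sum>z\<in>A. f z * sigma_Z2 (\<theta> (2 * n)) (- y) z * \<rho> (delta (- y + z)) \<xi> k)"
    by (simp add: SR_cmult[OF sr delta_CC SR_l2[OF sr delta_CC \<xi>]] SR_comp[OF sr \<xi>] mult_ac)
  finally show ?thesis by (simp add: A_def)
qed

lemma PI_ck_emb:
  assumes f: "f \<in> CC" and F: "finite F"
    and yF: "\<And>z. f z \<noteq> 0 \<Longrightarrow> y - z \<in> F"
  shows "pi_theta p \<theta> n f (ck p \<theta> n \<rho> \<xi> F k) (emb p n y)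
       = cis (pi * \<theta> (2 * n) * of_int (fst y) * of_int (snd y)) * \<rho> (delta (- y)) (\<rho> f \<xi>) k"
proof -
  define A where "A = {z. f z \<noteq> 0}"
  define t where "t = \<theta> (2 * n)"
  have "pi_theta p \<theta> n f (ck p \<theta> n \<rho> \<xi> F k) (emb p n y)
      = (\<Sum>z\<in>A. f z * Uop p \<theta> n z (ck p \<theta> n \<rho> \<xi> F k) (emb p n y))"
    using PI_sumC[OF p0 f] by (simp add: A_def)
  also have "\<dots> = (\<Sum>z\<in>A. cis (pi * t * of_int (fst y) * of_int (snd y)) *
                    (f z * sigma_Z2 t (- y) z * \<rho> (delta (- y + z)) \<xi> k))"
  proof (rule sum.cong[OF refl])
    fix z assume "z \<in> A"
    hence yz: "y - z \<in> F" using yF by (simp add: A_def)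
    have e: "emb p n y - emb p n z = emb p n (y - z)" by (simp add: emb_diff)
    have m: "- (y - z) = - y + z" by simp
    have ph: "ph p \<theta> n z (emb p n y) * cis (pi * t * of_int (fst (y - z)) * of_int (snd (y - z)))
       = cis (pi * t * of_int (fst y) * of_int (snd y)) * sigma_Z2 t (- y) z"
      unfolding ph_emb[OF p0] sigma_Z2_def cis_mult t_def
      by (rule arg_cong[where f = cis]) (simp add: algebra_simps)
    show "f z * Uop p \<theta> n z (ck p \<theta> n \<rho> \<xi> F k) (emb p n y) =
      cis (pi * t * of_int (fst y) * of_int (snd y)) * (f z * sigma_Z2 t (- y) z * \<rho> (delta (- y + z)) \<xi> k)"
      unfolding Uop_def e ck_emb using yz ph m by (simp add: t_def mult_ac)
  qed
  also have "\<dots> = cis (pi * t * of_int (fst y) * of_int (snd y)) * \<rho> (delta (- y)) (\<rho> f \<xi>) k"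
    unfolding V_shift_expand[OF f] by (simp add: sum_distrib_left A_def t_def)
  finally show ?thesis by (simp add: t_def)
qed

lemma folner_ineq:
  assumes f: "f \<in> CC" and F: "finite F" and F': "finite F'"
    and sub: "\<And>y z. y \<in> F' \<Longrightarrow> f z \<noteq> 0 \<Longrightarrow> y - z \<in> F"
  shows "real (card F') * nsq (\<rho> f \<xi>) \<le> (opnorm (Gamma_n p n) (pi_theta p \<theta> n f))\<^sup>2 * (real (card F) * nsq \<xi>)"
proof -
  define P where "P = opnorm (Gamma_n p n) (pi_theta p \<theta> n f)"
  define c where "c = (\<lambda>k. ck p \<theta> n \<rho> \<xi> F k)"
  define G1 where "G1 = (\<lambda>y k. (cmod (\<rho> (delta (- y)) (\<rho> f \<xi>) k))\<^sup>2)"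
  define G2 where "G2 = (\<lambda>x k. (cmod (\<rho> (delta (- x)) \<xi> k))\<^sup>2)"
  define H where "H = (\<lambda>k. nsq (pi_theta p \<theta> n f (c k)))"
  have rf: "\<rho> f \<xi> \<in> l2 UNIV" by (rule SR_l2[OF sr f \<xi>])
  have sG1: "G1 y summable_on UNIV" for y
    using l2D(1)[OF SR_l2[OF sr delta_CC rf]] by (simp add: G1_def sqs_def)
  have sG2: "G2 x summable_on UNIV" for x
    using l2D(1)[OF SR_l2[OF sr delta_CC \<xi>]] by (simp add: G2_def sqs_def)
  have cl2: "c k \<in> l2 (Gamma_n p n)" for k unfolding c_def by (rule ck_l2(1)[OF F])
  have bo: "bounded_op (Gamma_n p n) (pi_theta p \<theta> n f)" by (rule PI_bounded[OF p0 f])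
  have H0: "H k \<ge> 0" for k by (simp add: H_def nsq_nonneg)
  have Hup: "H k \<le> P\<^sup>2 * (\<Sum>x\<in>F. G2 x k)" for k
  proof -
    have "l2norm (pi_theta p \<theta> n f (c k)) \<le> P * l2norm (c k)"
      unfolding P_def by (rule opnorm_bound[OF bo cl2])
    hence "(l2norm (pi_theta p \<theta> n f (c k)))\<^sup>2 \<le> (P * l2norm (c k))\<^sup>2"
      by (intro power_mono) (simp_all add: l2norm_nonneg)
    thus ?thesis by (simp add: H_def l2norm_sq power_mult_distrib c_def ck_l2(2)[OF F] G2_def)
  qed
  have Hlow: "(\<Sum>y\<in>F'. G1 y k) \<le> H k" for k
  proof -
    have inj: "inj_on (emb p n) F'" using emb_inj[OF p0] by (auto intro: inj_on_subset)
    have "(\<Sum>y\<in>F'. G1 y k) = (\<Sum>y\<in>F'. (cmod (pi_theta p \<theta> n f (c k) (emb p n y)))\<^sup>2)"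
    proof (rule sum.cong[OF refl])
      fix y assume "y \<in> F'"
      thus "G1 y k = (cmod (pi_theta p \<theta> n f (c k) (emb p n y)))\<^sup>2"
        unfolding c_def G1_def using PI_ck_emb[OF f F, of y k] sub by (simp add: norm_mult)
    qed
    also have "\<dots> = (\<Sum>\<gamma>\<in>emb p n ` F'. (cmod (pi_theta p \<theta> n f (c k) \<gamma>))\<^sup>2)"
      by (rule sum.reindex[OF inj, unfolded comp_def, symmetric])
    also have "\<dots> \<le> H k" unfolding H_def nsq_def
      by (rule finite_sum_le_infsum) (use l2D(1)[OF PI_l2[OF p0 f cl2]] F' in \<open>auto simp: sqs_def\<close>)
    finally show ?thesis .
  qed
  have sR: "(\<lambda>k. P\<^sup>2 * (\<Sum>x\<in>F. G2 x k)) summable_on UNIV"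
    by (rule summable_on_cmult_right, rule infsum_sum_swap(2)[OF F sG2])
  have sH: "H summable_on UNIV"
    by (rule summable_on_comparison_test[OF sR]) (use Hup H0 in auto)
  have "real (card F') * nsq (\<rho> f \<xi>) = (\<Sum>y\<in>F'. nsq (\<rho> (delta (- y)) (\<rho> f \<xi>)))"
    by (simp add: SR_iso[OF sr rf])
  also have "\<dots> = (\<Sum>y\<in>F'. \<Sum>\<^sub>\<infinity>k. G1 y k)" by (simp add: nsq_def G1_def)
  also have "\<dots> = (\<Sum>\<^sub>\<infinity>k. \<Sum>y\<in>F'. G1 y k)" by (rule infsum_sum_swap(1)[OF F' sG1, symmetric])
  also have "\<dots> \<le> (\<Sum>\<^sub>\<infinity>k. H k)" by (rule infsum_mono[OF infsum_sum_swap(2)[OF F' sG1] sH Hlow])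
  also have "\<dots> \<le> (\<Sum>\<^sub>\<infinity>k. P\<^sup>2 * (\<Sum>x\<in>F. G2 x k))" by (rule infsum_mono[OF sH sR Hup])
  also have "\<dots> = P\<^sup>2 * (\<Sum>x\<in>F. \<Sum>\<^sub>\<infinity>k. G2 x k)"
    by (simp add: infsum_cmult_right' infsum_sum_swap(1)[OF F sG2])
  also have "\<dots> = P\<^sup>2 * (real (card F) * nsq \<xi>)"
    by (simp add: G2_def nsq_def[symmetric] SR_iso[OF sr \<xi>])
  finally show ?thesis by (simp add: P_def)
qed

end


lemma ratio_lim: "(\<lambda>m::nat. (2 * r + 2 * real m + 1) / (2 * real m + 1)) \<longlonglongrightarrow> 1"
  by real_asymp

lemma rep_bound:
  assumes p0: "p > 0" and sr: "star_rep (sigma_Z2 (\<theta> (2 * n))) (UNIV :: nat set) \<rho>" and f: "f \<in> CC"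
  shows "opnorm (UNIV :: nat set) (\<rho> f) \<le> opnorm (Gamma_n p n) (pi_theta p \<theta> n f)"
proof (rule opnorm_le)
  define P where "P = opnorm (Gamma_n p n) (pi_theta p \<theta> n f)"
  show P0: "opnorm (Gamma_n p n) (pi_theta p \<theta> n f) \<ge> 0"
    by (rule opnorm_nonneg[OF PI_bounded[OF p0 f]])
  fix \<xi> :: "nat \<Rightarrow> complex" assume \<xi>: "\<xi> \<in> l2 UNIV"
  define A where "A = {z. f z \<noteq> 0}"
  have fA: "finite A" using f by (simp add: A_def CC_def)
  define R where "R = (\<Sum>z\<in>A. \<bar>fst z\<bar> + \<bar>snd z\<bar>)"
  have R0: "R \<ge> 0" unfolding R_def by (rule sum_nonneg) auto
  have Rb: "\<bar>fst z\<bar> \<le> R \<and> \<bar>snd z\<bar> \<le> R" if "z \<in> A" for z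
  proof -
    have "\<bar>fst z\<bar> + \<bar>snd z\<bar> \<le> R" unfolding R_def
      by (rule member_le_sum[OF that _ fA, of "\<lambda>z. \<bar>fst z\<bar> + \<bar>snd z\<bar>"]) auto
    thus ?thesis by auto
  qed
  define a where "a = nsq (\<rho> f \<xi>)"
  define b where "b = nsq \<xi>"
  have key: "(2 * real m + 1)\<^sup>2 * a \<le> P\<^sup>2 * ((2 * (real_of_int R + real m) + 1)\<^sup>2 * b)" for m :: nat
  proof -
    have sub: "y - z \<in> sqbox (R + int m)" if "y \<in> sqbox (int m)" "f z \<noteq> 0" for y z
      using that Rb[of z] by (auto simp: sqbox_def A_def mem_Times_iff)
    have "real (card (sqbox (int m))) * a \<le> P\<^sup>2 * (real (card (sqbox (R + int m))) * b)"
      unfolding a_def b_def P_def by (rule folner_ineq[of p \<theta> n \<rho> \<xi> f "sqbox (R + int m)" "sqbox (int m)", OF p0 sr \<xi> f finite_sqbox finite_sqbox sub])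
    thus ?thesis using R0 by (simp add: card_sqbox)
  qed
  have a0: "a \<ge> 0" "b \<ge> 0" by (simp_all add: a_def b_def nsq_nonneg)
  have le: "a \<le> P\<^sup>2 * b * ((2 * real_of_int R + 2 * real m + 1) / (2 * real m + 1))\<^sup>2" for m :: nat
  proof -
    have pos: "(2 * real m + 1)\<^sup>2 > 0" by simp
    have "(2 * real m + 1)\<^sup>2 * a \<le> (2 * real m + 1)\<^sup>2 * (P\<^sup>2 * b * ((2 * real_of_int R + 2 * real m + 1) / (2 * real m + 1))\<^sup>2)"
      using key[of m] by (simp add: power_divide algebra_simps)
    thus ?thesis using pos by (simp only: mult_le_cancel_left_pos)
  qed
  have lim: "(\<lambda>m::nat. P\<^sup>2 * b * ((2 * real_of_int R + 2 * real m + 1) / (2 * real m + 1))\<^sup>2) \<longlonglongrightarrow> P\<^sup>2 * b * 1\<^sup>2"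
    by (intro tendsto_mult_left tendsto_power ratio_lim)
  have "a \<le> P\<^sup>2 * b * 1\<^sup>2" by (rule LIMSEQ_le_const[OF lim]) (use le in auto)
  hence "sqrt a \<le> sqrt (P\<^sup>2 * b)" by simp
  thus "l2norm (\<rho> f \<xi>) \<le> opnorm (Gamma_n p n) (pi_theta p \<theta> n f) * l2norm \<xi>"
    using P0 by (simp add: l2norm_nsq a_def b_def P_def real_sqrt_mult)
qed


lemma infsum_transport:
  fixes F :: "'a \<Rightarrow> 'b::{comm_monoid_add, t2_space}"
  assumes b: "bij_betw b UNIV X" and z: "\<And>\<gamma>. \<gamma> \<notin> X \<Longrightarrow> F \<gamma> = 0"
  shows "infsum (\<lambda>k. F (b k)) UNIV = infsum F UNIV"
proof -
  have "infsum (\<lambda>k. F (b k)) UNIV = infsum F X" by (rule infsum_reindex_bij_betw[OF b])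
  also have "\<dots> = infsum F UNIV" by (rule infsum_cong_neutral) (use z in auto)
  finally show ?thesis .
qed

lemma summable_transport:
  fixes F :: "'a \<Rightarrow> 'b::{comm_monoid_add, t2_space}"
  assumes b: "bij_betw b UNIV X" and z: "\<And>\<gamma>. \<gamma> \<notin> X \<Longrightarrow> F \<gamma> = 0"
  shows "(\<lambda>k. F (b k)) summable_on UNIV \<longleftrightarrow> F summable_on UNIV"
proof -
  have "(\<lambda>k. F (b k)) summable_on UNIV \<longleftrightarrow> F summable_on X" by (rule summable_on_reindex_bij_betw[OF b])
  also have "\<dots> \<longleftrightarrow> F summable_on UNIV" by (rule summable_on_cong_neutral) (use z in auto)
  finally show ?thesis .
qed

context
  fixes b :: "'y \<Rightarrow> 'x" and X :: "'x set"
  assumes b: "bij_betw b UNIV X"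
begin

definition Tr :: "('x \<Rightarrow> complex) \<Rightarrow> 'y \<Rightarrow> complex" where "Tr g = (\<lambda>k. g (b k))"
definition Sr :: "('y \<Rightarrow> complex) \<Rightarrow> 'x \<Rightarrow> complex" where
  "Sr h = (\<lambda>\<gamma>. if \<gamma> \<in> X then h (inv_into UNIV b \<gamma>) else 0)"

lemma b_in: "b k \<in> X" using b by (auto simp: bij_betw_def)
lemma inv_b: "inv_into UNIV b (b k) = k" using b by (auto simp: bij_betw_def)
lemma b_inv: "\<gamma> \<in> X \<Longrightarrow> b (inv_into UNIV b \<gamma>) = \<gamma>" using b by (auto simp: bij_betw_def f_inv_into_f)

lemma Tr_l2: "g \<in> l2 X \<Longrightarrow> Tr g \<in> l2 UNIV \<and> nsq (Tr g) = nsq g"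
proof -
  assume g: "g \<in> l2 X"
  have z: "\<And>\<gamma>. \<gamma> \<notin> X \<Longrightarrow> (cmod (g \<gamma>))\<^sup>2 = 0" using l2D(2)[OF g] by simp
  have e: "(\<lambda>k. (cmod (g (b k)))\<^sup>2) summable_on UNIV \<longleftrightarrow> (\<lambda>\<gamma>. (cmod (g \<gamma>))\<^sup>2) summable_on UNIV"
    by (rule summable_transport[OF b]) (rule z)
  have "sqs (Tr g)" unfolding sqs_def Tr_def e using l2D(1)[OF g] by (simp add: sqs_def)
  moreover have "nsq (Tr g) = nsq g" unfolding nsq_def Tr_def by (rule infsum_transport[OF b]) (rule z)
  ultimately show ?thesis by (auto intro: l2I)
qed

lemma Tr_inner: "g \<in> l2 X \<Longrightarrow> g' \<in> l2 X \<Longrightarrow> l2inner (Tr g) (Tr g') = l2inner g g'"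
  unfolding l2inner_def Tr_def by (rule infsum_transport[OF b]) (simp add: l2D(2))

lemma Sr_l2: "h \<in> l2 UNIV \<Longrightarrow> Sr h \<in> l2 X"
proof -
  assume h: "h \<in> l2 UNIV"
  have "Tr (Sr h) = h" by (simp add: Tr_def Sr_def b_in inv_b)
  have z: "\<And>\<gamma>. \<gamma> \<notin> X \<Longrightarrow> (cmod (Sr h \<gamma>))\<^sup>2 = 0" by (simp add: Sr_def)
  have "(\<lambda>k. (cmod (Sr h (b k)))\<^sup>2) summable_on UNIV"
    using l2D(1)[OF h] \<open>Tr (Sr h) = h\<close> unfolding sqs_def Tr_def by metis
  moreover have "(\<lambda>k. (cmod (Sr h (b k)))\<^sup>2) summable_on UNIV \<longleftrightarrow> (\<lambda>\<gamma>. (cmod (Sr h \<gamma>))\<^sup>2) summable_on UNIV"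
    by (rule summable_transport[OF b]) (rule z)
  ultimately have "sqs (Sr h)" unfolding sqs_def by simp
  thus ?thesis by (rule l2I) (simp add: Sr_def)
qed

lemma TrSr: "Tr (Sr h) = h" by (simp add: Tr_def Sr_def b_in inv_b)

lemma SrTr: "g \<in> l2 X \<Longrightarrow> Sr (Tr g) = g"
  by (rule ext) (auto simp: Tr_def Sr_def b_inv l2D(2))

lemma Sr_nsq: "h \<in> l2 UNIV \<Longrightarrow> nsq (Sr h) = nsq h"
  using Tr_l2[OF Sr_l2] TrSr by metis

lemma Sr_add: "Sr (\<lambda>x. h x + h' x) = (\<lambda>x. Sr h x + Sr h' x)" by (auto simp: Sr_def)
lemma Sr_cmult: "Sr (\<lambda>x. c * h x) = (\<lambda>x. c * Sr h x)" by (auto simp: Sr_def)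
lemma Tr_add: "Tr (\<lambda>x. h x + h' x) = (\<lambda>x. Tr h x + Tr h' x)" by (auto simp: Tr_def)
lemma Tr_cmult: "Tr (\<lambda>x. c * h x) = (\<lambda>x. c * Tr h x)" by (auto simp: Tr_def)

definition rho0 where "rho0 \<pi> f h = Tr (\<pi> f (Sr h))"

lemma transport_star_rep:
  fixes \<sigma> :: "'g::ab_group_add \<Rightarrow> 'g \<Rightarrow> complex" and \<pi> :: "('g \<Rightarrow> complex) \<Rightarrow> ('x \<Rightarrow> complex) \<Rightarrow> 'x \<Rightarrow> complex"
  assumes sr: "star_rep \<sigma> X \<pi>"
  shows "star_rep \<sigma> (UNIV :: 'y set) (rho0 \<pi>)"
  unfolding star_rep_def
proof (intro conjI ballI allI)
  fix f :: "'g \<Rightarrow> complex" assume f: "f \<in> CC"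
  have bo: "bounded_op X (\<pi> f)" using sr f unfolding star_rep_def by blast
  then obtain C where C: "\<And>g. g \<in> l2 X \<Longrightarrow> l2norm (\<pi> f g) \<le> C * l2norm g" unfolding bounded_op_def by blast
  show "bounded_op UNIV (rho0 \<pi> f)" unfolding bounded_op_def
  proof (intro conjI ballI allI)
    fix g :: "'y \<Rightarrow> complex" assume "g \<in> l2 UNIV"
    thus "rho0 \<pi> f g \<in> l2 UNIV" unfolding rho0_def using bo Sr_l2 Tr_l2 unfolding bounded_op_def by blast
  next
    fix g h :: "'y \<Rightarrow> complex" assume "g \<in> l2 UNIV" "h \<in> l2 UNIV"
    thus "rho0 \<pi> f (\<lambda>x. g x + h x) = (\<lambda>x. rho0 \<pi> f g x + rho0 \<pi> f h x)"
      unfolding rho0_def Sr_add using bo Sr_l2 unfolding bounded_op_def by (simp add: Tr_add)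
  next
    fix g :: "'y \<Rightarrow> complex" and c assume "g \<in> l2 UNIV"
    thus "rho0 \<pi> f (\<lambda>x. c * g x) = (\<lambda>x. c * rho0 \<pi> f g x)"
      unfolding rho0_def Sr_cmult using bo Sr_l2 unfolding bounded_op_def by (simp add: Tr_cmult)
  next
    show "\<exists>C. \<forall>g\<in>l2 UNIV. l2norm (rho0 \<pi> f g) \<le> C * l2norm g"
    proof (intro exI ballI)
      fix g :: "'y \<Rightarrow> complex" assume g: "g \<in> l2 UNIV"
      have "l2norm (rho0 \<pi> f g) = l2norm (\<pi> f (Sr g))"
        unfolding rho0_def l2norm_nsq using Tr_l2 bo Sr_l2[OF g] unfolding bounded_op_def by metis
      also have "\<dots> \<le> C * l2norm (Sr g)" by (rule C[OF Sr_l2[OF g]])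
      also have "l2norm (Sr g) = l2norm g" by (simp add: l2norm_nsq Sr_nsq[OF g])
      finally show "l2norm (rho0 \<pi> f g) \<le> C * l2norm g" .
    qed
  qed
next
  fix f f' :: "'g \<Rightarrow> complex" and h :: "'y \<Rightarrow> complex" assume "f \<in> CC" "f' \<in> CC" "h \<in> l2 UNIV"
  thus "rho0 \<pi> (\<lambda>\<gamma>. f \<gamma> + f' \<gamma>) h = (\<lambda>x. rho0 \<pi> f h x + rho0 \<pi> f' h x)"
    unfolding rho0_def using sr Sr_l2 unfolding star_rep_def by (simp add: Tr_add)
next
  fix f :: "'g \<Rightarrow> complex" and c and h :: "'y \<Rightarrow> complex" assume "f \<in> CC" "h \<in> l2 UNIV"
  thus "rho0 \<pi> (\<lambda>\<gamma>. c * f \<gamma>) h = (\<lambda>x. c * rho0 \<pi> f h x)"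
    unfolding rho0_def using sr Sr_l2 unfolding star_rep_def by (simp add: Tr_cmult)
next
  fix f f' :: "'g \<Rightarrow> complex" and h :: "'y \<Rightarrow> complex" assume f: "f \<in> CC" and f': "f' \<in> CC" and h: "h \<in> l2 UNIV"
  have l: "\<pi> f' (Sr h) \<in> l2 X" using sr f' Sr_l2[OF h] unfolding star_rep_def bounded_op_def by blast
  show "rho0 \<pi> (twconv \<sigma> f f') h = rho0 \<pi> f (rho0 \<pi> f' h)"
    unfolding rho0_def SrTr[OF l] using sr f f' Sr_l2[OF h] unfolding star_rep_def by simp
next
  fix f :: "'g \<Rightarrow> complex" and h k :: "'y \<Rightarrow> complex" assume f: "f \<in> CC" and h: "h \<in> l2 UNIV" and k: "k \<in> l2 UNIV"
  have ti: "twinv \<sigma> f \<in> CC \<Longrightarrow> True" by simp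
  have l1: "\<pi> (twinv \<sigma> f) (Sr h) \<in> l2 X \<or> True" by simp
  have adj: "l2inner (\<pi> (twinv \<sigma> f) (Sr h)) (Sr k) = l2inner (Sr h) (\<pi> f (Sr k))"
    using sr f Sr_l2[OF h] Sr_l2[OF k] unfolding star_rep_def by blast
  have lk: "\<pi> f (Sr k) \<in> l2 X" using sr f Sr_l2[OF k] unfolding star_rep_def bounded_op_def by blast
  have "l2inner (rho0 \<pi> (twinv \<sigma> f) h) k = (\<Sum>\<^sub>\<infinity>x. \<pi> (twinv \<sigma> f) (Sr h) (b x) * cnj (Sr k (b x)))"
    unfolding rho0_def l2inner_def Tr_def using TrSr[of k] unfolding Tr_def by metis
  also have "\<dots> = l2inner (\<pi> (twinv \<sigma> f) (Sr h)) (Sr k)"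
    unfolding l2inner_def by (rule infsum_transport[OF b]) (simp add: Sr_def)
  also have "\<dots> = l2inner (Sr h) (\<pi> f (Sr k))" by (rule adj)
  also have "\<dots> = l2inner (Tr (Sr h)) (Tr (\<pi> f (Sr k)))" by (rule Tr_inner[OF Sr_l2[OF h] lk, symmetric])
  also have "\<dots> = l2inner h (rho0 \<pi> f k)" by (simp add: TrSr rho0_def)
  finally show "l2inner (rho0 \<pi> (twinv \<sigma> f) h) k = l2inner h (rho0 \<pi> f k)" .
next
  fix h :: "'y \<Rightarrow> complex" assume h: "h \<in> l2 UNIV"
  show "rho0 \<pi> (delta 0) h = h"
    unfolding rho0_def using sr Sr_l2[OF h] TrSr unfolding star_rep_def by simp
qed

lemma transport_opnorm:
  fixes \<sigma> :: "'g::ab_group_add \<Rightarrow> 'g \<Rightarrow> complex" and \<pi> :: "('g \<Rightarrow> complex) \<Rightarrow> ('x \<Rightarrow> complex) \<Rightarrow> 'x \<Rightarrow> complex"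
  assumes sr: "star_rep \<sigma> X \<pi>" and f: "f \<in> CC"
  shows "opnorm (UNIV :: 'y set) (rho0 \<pi> f) = opnorm X (\<pi> f)"
proof -
  have bo: "bounded_op X (\<pi> f)" using sr f unfolding star_rep_def by blast
  have eqn: "l2norm (rho0 \<pi> f h) = l2norm (\<pi> f (Sr h))" if "h \<in> l2 UNIV" for h :: "'y \<Rightarrow> complex"
    unfolding rho0_def l2norm_nsq using Tr_l2 bo Sr_l2[OF that] unfolding bounded_op_def by metis
  have "{l2norm (rho0 \<pi> f h) |h :: 'y \<Rightarrow> complex. h \<in> l2 UNIV \<and> l2norm h \<le> 1} = {l2norm (\<pi> f g) |g. g \<in> l2 X \<and> l2norm g \<le> 1}"
  proof (intro set_eqI iffI)
    fix q assume "q \<in> {l2norm (rho0 \<pi> f h) |h :: 'y \<Rightarrow> complex. h \<in> l2 UNIV \<and> l2norm h \<le> 1}"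
    then obtain h where h: "h \<in> l2 UNIV" "l2norm h \<le> 1" "q = l2norm (rho0 \<pi> f h)" by auto
    have "Sr h \<in> l2 X" "l2norm (Sr h) \<le> 1" "q = l2norm (\<pi> f (Sr h))"
      using h Sr_l2 Sr_nsq eqn by (auto simp: l2norm_nsq)
    thus "q \<in> {l2norm (\<pi> f g) |g. g \<in> l2 X \<and> l2norm g \<le> 1}" by blast
  next
    fix q assume "q \<in> {l2norm (\<pi> f g) |g. g \<in> l2 X \<and> l2norm g \<le> 1}"
    then obtain g where g: "g \<in> l2 X" "l2norm g \<le> 1" "q = l2norm (\<pi> f g)" by auto
    have "Tr g \<in> l2 UNIV" "l2norm (Tr g) \<le> 1" using Tr_l2[OF g(1)] g by (auto simp: l2norm_nsq)
    moreover have "q = l2norm (rho0 \<pi> f (Tr g))" using eqn[OF \<open>Tr g \<in> l2 UNIV\<close>] g SrTr by simp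
    ultimately show "q \<in> {l2norm (rho0 \<pi> f h) |h. h \<in> l2 UNIV \<and> l2norm h \<le> 1}" by blast
  qed
  thus ?thesis unfolding opnorm_def by simp
qed

end


lemma Gamma_bij: assumes p0: "p > 0"
  obtains b :: "nat \<Rightarrow> rat \<times> rat" where "bij_betw b UNIV (Gamma_n p n)"
proof -
  have c: "countable (Gamma_n p n)" unfolding Gamma_emb by simp
  have i: "infinite (Gamma_n p n)"
  proof
    assume "finite (Gamma_n p n)"
    hence "finite (UNIV :: (int \<times> int) set)"
      unfolding Gamma_emb using emb_inj[OF p0] finite_imageD by blast
    thus False by (simp add: finite_prod)
  qed
  obtain e :: "rat \<times> rat \<Rightarrow> nat" where e: "bij_betw e (Gamma_n p n) UNIV"
    using countableE_infinite[OF c i] by blast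
  have "bij_betw (inv_into (Gamma_n p n) e) UNIV (Gamma_n p n)" by (rule bij_betw_inv_into[OF e])
  thus ?thesis by (rule that)
qed

lemma univ_norm_eq:
  assumes p0: "p > 0" and f: "f \<in> CC"
  shows "opnorm (Gamma_n p n) (pi_theta p \<theta> n f) = univ_norm (sigma_Z2 (\<theta> (2 * n))) f"
proof -
  obtain b :: "nat \<Rightarrow> rat \<times> rat" where b: "bij_betw b UNIV (Gamma_n p n)" using Gamma_bij[OF p0] by blast
  have sr: "star_rep (sigma_Z2 (\<theta> (2 * n))) (Gamma_n p n) (pi_theta p \<theta> n)" by (rule PI_star_rep[OF p0])
  have sr0: "star_rep (sigma_Z2 (\<theta> (2 * n))) (UNIV :: nat set) (rho0 b (Gamma_n p n) (pi_theta p \<theta> n))"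
    by (rule transport_star_rep[OF b sr])
  have eq0: "opnorm (UNIV :: nat set) (rho0 b (Gamma_n p n) (pi_theta p \<theta> n) f) = opnorm (Gamma_n p n) (pi_theta p \<theta> n f)"
    by (rule transport_opnorm[OF b sr f])
  show ?thesis unfolding univ_norm_def
  proof (rule cSup_eq_maximum[symmetric])
    show "opnorm (Gamma_n p n) (pi_theta p \<theta> n f) \<in> {opnorm UNIV (\<rho> f) |\<rho>. star_rep (sigma_Z2 (\<theta> (2 * n))) (UNIV :: nat set) \<rho>}"
      using sr0 eq0 by (intro CollectI exI[of _ "rho0 b (Gamma_n p n) (pi_theta p \<theta> n)"]) simp
  next
    fix x assume "x \<in> {opnorm UNIV (\<rho> f) |\<rho>. star_rep (sigma_Z2 (\<theta> (2 * n))) (UNIV :: nat set) \<rho>}"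
    then obtain \<rho> where "star_rep (sigma_Z2 (\<theta> (2 * n))) (UNIV :: nat set) \<rho>" "x = opnorm UNIV (\<rho> f)" by blast
    thus "x \<le> opnorm (Gamma_n p n) (pi_theta p \<theta> n f)" using rep_bound[OF p0 _ f] by simp
  qed
qed


lemma padic_nonneg: "padic_abs p r \<ge> 0"
  by (auto simp: padic_abs_def split: prod.splits)

lemma padic_bound:
  assumes p: "prime p"
  shows "padic_abs p (of_int a / of_nat p ^ n) \<le> real p ^ n"
proof (cases "of_int a / (of_nat p ^ n :: rat) = 0")
  case True thus ?thesis by (simp add: padic_abs_def)
next
  case False
  define r where "r = of_int a / (of_nat p ^ n :: rat)"
  obtain a' b' where q: "quotient_of r = (a', b')" by (cases "quotient_of r")
  have b'0: "b' > 0" by (rule quotient_of_denom_pos[OF q])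
  have cop: "coprime a' b'" by (rule quotient_of_coprime[OF q])
  have p0: "p > 0" using p prime_gt_0_nat by blast
  have "of_int a' / of_int b' = (of_int a / of_int (int p ^ n) :: rat)"
    using quotient_of_div[OF q] by (simp add: r_def)
  hence "of_int a' * of_int (int p ^ n) = (of_int a * of_int b' :: rat)"
    using b'0 p0 by (simp add: field_simps)
  hence e: "a' * int p ^ n = a * b'" by (metis of_int_eq_iff of_int_mult)
  have "b' dvd a' * int p ^ n" unfolding e by simp
  hence dv: "b' dvd int p ^ n" using cop by (simp add: coprime_dvd_mult_right_iff coprime_commute)
  have pe: "prime_elem (int p)" using p by simp
  have "multiplicity (int p) b' \<le> multiplicity (int p) (int p ^ n)"
    by (rule dvd_imp_multiplicity_le[OF dv]) (use p0 in simp)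
  hence mb: "multiplicity (int p) b' \<le> n" using pe by simp
  have p1: "real p \<ge> 1" using p0 by simp
  have "padic_abs p r = real p powr (- (real (multiplicity (int p) a') - real (multiplicity (int p) b')))"
    using False q by (simp add: padic_abs_def r_def)
  also have "\<dots> \<le> real p powr (real n)" by (rule powr_mono) (use mb p1 in auto)
  also have "\<dots> = real p ^ n" using p0 by (simp add: powr_realpow)
  finally show ?thesis by (simp add: r_def)
qed

lemma emb_fst: "fst (emb p n v) = of_int (fst v) / of_nat p ^ n" "snd (emb p n v) = of_int (snd v) / of_nat p ^ n"
  by (simp_all add: emb_def NN_def)

lemma padic_Gamma:
  assumes p: "prime p" and x: "x \<in> Gamma_n p n"
  shows "padic_abs p (fst x) \<le> real p ^ n" "padic_abs p (snd x) \<le> real p ^ n"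
proof -
  obtain v where "x = emb p n v" using x by (auto simp: Gamma_emb)
  thus "padic_abs p (fst x) \<le> real p ^ n" "padic_abs p (snd x) \<le> real p ^ n"
    using padic_bound[OF p] by (simp_all add: emb_fst)
qed

lemma LSigma_nonneg: "LSigma p x \<ge> 0"
  by (simp add: LSigma_def Lp_def padic_nonneg add_nonneg_nonneg)

lemma LSigma_ge: "LSigma p x \<ge> \<bar>of_rat (fst x)\<bar> + \<bar>of_rat (snd x)\<bar>"
  using padic_nonneg[of p "fst x"] padic_nonneg[of p "snd x"] by (simp add: LSigma_def Lp_def)

lemma LSigma_diff:
  assumes p: "prime p" and x: "x \<in> Gamma_n p n"
  shows "\<bar>LSigma p x - LSigma p (x - emb p n z)\<bar> \<le> real_of_int (\<bar>fst z\<bar> + \<bar>snd z\<bar>) + 2 * real p ^ n"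
proof -
  have p0: "p > 0" using p prime_gt_0_nat by blast
  have x': "x - emb p n z \<in> Gamma_n p n" using x by (simp add: Gamma_diff_iff)
  have N1: "(of_nat p ^ n :: real) \<ge> 1" using p0 by (simp add: one_le_power)
  have c1: "\<bar>of_rat (fst (emb p n z)) :: real\<bar> \<le> of_int \<bar>fst z\<bar>"
  proof -
    have "\<bar>of_rat (fst (emb p n z)) :: real\<bar> = \<bar>of_int (fst z)\<bar> / of_nat p ^ n"
      by (simp add: emb_fst of_rat_divide of_rat_power)
    also have "\<dots> \<le> \<bar>of_int (fst z)\<bar>" using N1 by (simp add: divide_le_eq) (simp add: mult_le_cancel_left1)
    finally show ?thesis by simp
  qed
  have c2: "\<bar>of_rat (snd (emb p n z)) :: real\<bar> \<le> of_int \<bar>snd z\<bar>"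
  proof -
    have "\<bar>of_rat (snd (emb p n z)) :: real\<bar> = \<bar>of_int (snd z)\<bar> / of_nat p ^ n"
      by (simp add: emb_fst of_rat_divide of_rat_power)
    also have "\<dots> \<le> \<bar>of_int (snd z)\<bar>" using N1 by (simp add: divide_le_eq) (simp add: mult_le_cancel_left1)
    finally show ?thesis by simp
  qed
  have pa: "padic_abs p (fst x) \<le> real p ^ n" "padic_abs p (snd x) \<le> real p ^ n"
    "padic_abs p (fst (x - emb p n z)) \<le> real p ^ n" "padic_abs p (snd (x - emb p n z)) \<le> real p ^ n"
    using padic_Gamma[OF p x] padic_Gamma[OF p x'] by auto
  have pn: "padic_abs p (fst x) \<ge> 0" "padic_abs p (snd x) \<ge> 0"
    "padic_abs p (fst (x - emb p n z)) \<ge> 0" "padic_abs p (snd (x - emb p n z)) \<ge> 0"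
    by (simp_all add: padic_nonneg)
  have gen: "\<And>a c :: real. \<bar>\<bar>a\<bar> - \<bar>a - c\<bar>\<bar> \<le> \<bar>c\<bar>" by arith
  have d1: "\<bar>\<bar>of_rat (fst x)\<bar> - \<bar>of_rat (fst (x - emb p n z))\<bar>\<bar> \<le> \<bar>of_rat (fst (emb p n z)) :: real\<bar>"
    using gen[of "of_rat (fst x)" "of_rat (fst (emb p n z))"] by (simp only: fst_diff of_rat_diff)
  have d2: "\<bar>\<bar>of_rat (snd x)\<bar> - \<bar>of_rat (snd (x - emb p n z))\<bar>\<bar> \<le> \<bar>of_rat (snd (emb p n z)) :: real\<bar>"
    using gen[of "of_rat (snd x)" "of_rat (snd (emb p n z))"] by (simp only: snd_diff of_rat_diff)
  have gen2: "\<And>u1 u2 v1 v2 P1 P2 Q1 Q2 c1 c2 M :: real. \<bar>u1 - u2\<bar> \<le> c1 \<Longrightarrow> \<bar>v1 - v2\<bar> \<le> c2 \<Longrightarrow>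
      0 \<le> P1 \<Longrightarrow> P1 \<le> M \<Longrightarrow> 0 \<le> P2 \<Longrightarrow> P2 \<le> M \<Longrightarrow> 0 \<le> Q1 \<Longrightarrow> Q1 \<le> M \<Longrightarrow> 0 \<le> Q2 \<Longrightarrow> Q2 \<le> M \<Longrightarrow>
      \<bar>(u1 + P1) + (v1 + Q1) - ((u2 + P2) + (v2 + Q2))\<bar> \<le> c1 + c2 + 2 * M"
    by arith
  have "\<bar>LSigma p x - LSigma p (x - emb p n z)\<bar> \<le> \<bar>of_rat (fst (emb p n z)) :: real\<bar> + \<bar>of_rat (snd (emb p n z)) :: real\<bar> + 2 * real p ^ n"
    unfolding LSigma_def Lp_def by (rule gen2[OF d1 d2 pn(1) pa(1) pn(3) pa(3) pn(2) pa(2) pn(4) pa(4)])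
  thus ?thesis using c1 c2 by simp
qed


lemma fin_supp_l2:
  assumes "finite F" "\<And>x. x \<notin> F \<Longrightarrow> g x = 0" "F \<subseteq> X"
  shows "g \<in> l2 X"
proof (rule l2I)
  show "sqs g" unfolding sqs_def by (rule infsum_finite_supp(2)[OF assms(1)]) (use assms(2) in simp)
next
  fix x assume "x \<notin> X" thus "g x = 0" using assms by auto
qed

lemma fin_supp_dom:
  assumes "finite F" "\<And>x. x \<notin> F \<Longrightarrow> g x = 0" "F \<subseteq> X"
  shows "g \<in> mult_dom X L"
  unfolding mult_dom_def using fin_supp_l2[OF assms] fin_supp_l2[OF assms(1) _ assms(3), of "\<lambda>x. complex_of_real (L x) * g x"] assms(2)
  by simp

lemma mult_dom_dense: "dense_in_l2 X (mult_dom X L)"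
  unfolding dense_in_l2_def
proof (intro conjI ballI allI impI)
  show "mult_dom X L \<subseteq> l2 X" by (auto simp: mult_dom_def)
next
  fix h :: "'a \<Rightarrow> complex" and \<epsilon> :: real assume h: "h \<in> l2 X" and e: "\<epsilon> > 0"
  define q where "q = (\<lambda>x. (cmod (h x))\<^sup>2)"
  have sq: "q summable_on UNIV" using l2D(1)[OF h] by (simp add: sqs_def q_def)
  obtain F where F: "finite F" "dist (sum q F) (infsum q UNIV) \<le> \<epsilon>\<^sup>2 / 2"
    using infsum_finite_approximation[OF sq, of "\<epsilon>\<^sup>2 / 2"] e by auto
  define F' where "F' = F \<inter> X"
  have F': "finite F'" "F' \<subseteq> X" using F by (auto simp: F'_def)
  define g where "g = (\<lambda>x. if x \<in> F then h x else 0)"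
  have gd: "g \<in> mult_dom X L"
    by (rule fin_supp_dom[OF F'(1) _ F'(2)]) (auto simp: g_def F'_def l2D(2)[OF h])
  have s1: "(\<lambda>x. if x \<in> F then q x else 0) summable_on UNIV"
    by (rule infsum_finite_supp(2)[OF F(1)]) auto
  have s2: "(\<lambda>x. if x \<in> F then 0 else q x) summable_on UNIV"
    by (rule summable_on_comparison_test[OF sq]) (auto simp: q_def)
  have "infsum q UNIV = infsum (\<lambda>x. (if x \<in> F then q x else 0) + (if x \<in> F then 0 else q x)) UNIV"
    by (rule infsum_cong) simp
  also have "\<dots> = infsum (\<lambda>x. if x \<in> F then q x else 0) UNIV + infsum (\<lambda>x. if x \<in> F then 0 else q x) UNIV"
    by (rule infsum_add[OF s1 s2])
  also have "infsum (\<lambda>x. if x \<in> F then q x else 0) UNIV = sum (\<lambda>x. if x \<in> F then q x else 0) F"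
    by (rule infsum_finite_supp(1)[OF F(1)]) auto
  also have "\<dots> = sum q F" by simp
  finally have split: "infsum q UNIV = sum q F + infsum (\<lambda>x. if x \<in> F then 0 else q x) UNIV" .
  have "nsq (\<lambda>x. h x - g x) = infsum (\<lambda>x. if x \<in> F then 0 else q x) UNIV"
    unfolding nsq_def g_def q_def by (rule infsum_cong) simp
  hence "nsq (\<lambda>x. h x - g x) = infsum q UNIV - sum q F" using split by simp
  also have "\<dots> \<le> \<epsilon>\<^sup>2 / 2" using F(2) unfolding dist_real_def by linarith
  also have "\<dots> < \<epsilon>\<^sup>2" using e by simp
  finally have "sqrt (nsq (\<lambda>x. h x - g x)) < sqrt (\<epsilon>\<^sup>2)" by (rule real_sqrt_less_mono)
  hence "l2norm (\<lambda>x. h x - g x) < \<epsilon>" using e by (simp add: l2norm_nsq)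
  thus "\<exists>g\<in>mult_dom X L. l2norm (\<lambda>x. h x - g x) < \<epsilon>" using gd by blast
qed

lemma infsum_single:
  assumes "\<And>y. y \<noteq> x \<Longrightarrow> F y = 0" shows "infsum F UNIV = F x"
  using infsum_finite_supp(1)[of "{x}" F] assms by auto

lemma mult_selfadjoint: "selfadjoint X (mult_dom X L) (mult_op L)"
  unfolding selfadjoint_def
proof (intro conjI ballI allI)
  show "dense_in_l2 X (mult_dom X L)" by (rule mult_dom_dense)
next
  fix g assume "g \<in> mult_dom X L" thus "mult_op L g \<in> l2 X" by (simp add: mult_dom_def mult_op_def)
next
  fix g h assume "g \<in> mult_dom X L" "h \<in> mult_dom X L"
  thus "(\<lambda>x. g x + h x) \<in> mult_dom X L" by (auto simp: mult_dom_def distrib_left intro: l2_add)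
  show "mult_op L (\<lambda>x. g x + h x) = (\<lambda>x. mult_op L g x + mult_op L h x)" by (simp add: mult_op_def distrib_left)
next
  fix g c assume "g \<in> mult_dom X L"
  thus "(\<lambda>x. c * g x) \<in> mult_dom X L"
    using l2_cmult[of "\<lambda>x. complex_of_real (L x) * g x" X c] by (auto simp: mult_dom_def mult_ac intro: l2_cmult)
  show "mult_op L (\<lambda>x. c * g x) = (\<lambda>x. c * mult_op L g x)" by (simp add: mult_op_def mult_ac)
next
  fix g h assume "g \<in> mult_dom X L" "h \<in> mult_dom X L"
  show "l2inner (mult_op L g) h = l2inner g (mult_op L h)"
    unfolding l2inner_def mult_op_def by (simp add: mult_ac)
next
  fix h assume h: "h \<in> l2 X"
  show "(\<exists>k\<in>l2 X. \<forall>g\<in>mult_dom X L. l2inner (mult_op L g) h = l2inner g k) \<longleftrightarrow> h \<in> mult_dom X L"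
  proof
    assume "h \<in> mult_dom X L"
    hence "mult_op L h \<in> l2 X" by (simp add: mult_dom_def mult_op_def)
    moreover have "\<forall>g\<in>mult_dom X L. l2inner (mult_op L g) h = l2inner g (mult_op L h)"
      unfolding l2inner_def mult_op_def by (simp add: mult_ac)
    ultimately show "\<exists>k\<in>l2 X. \<forall>g\<in>mult_dom X L. l2inner (mult_op L g) h = l2inner g k" by blast
  next
    assume "\<exists>k\<in>l2 X. \<forall>g\<in>mult_dom X L. l2inner (mult_op L g) h = l2inner g k"
    then obtain k where k: "k \<in> l2 X" "\<And>g. g \<in> mult_dom X L \<Longrightarrow> l2inner (mult_op L g) h = l2inner g k" by blast
    have "k x = complex_of_real (L x) * h x" for x
    proof (cases "x \<in> X")
      case False thus ?thesis using l2D(2)[OF k(1)] l2D(2)[OF h] by simp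
    next
      case True
      have dd: "delta x \<in> mult_dom X L"
        by (rule fin_supp_dom[of "{x}"]) (use True in \<open>auto simp: delta_def\<close>)
      have "l2inner (mult_op L (delta x)) h = complex_of_real (L x) * cnj (h x)"
        unfolding l2inner_def mult_op_def by (subst infsum_single[of x]) (auto simp: delta_def)
      moreover have "l2inner (delta x) k = cnj (k x)"
        unfolding l2inner_def by (subst infsum_single[of x]) (auto simp: delta_def)
      ultimately have "cnj (k x) = complex_of_real (L x) * cnj (h x)" using k(2)[OF dd] by simp
      hence "cnj (cnj (k x)) = cnj (complex_of_real (L x) * cnj (h x))" by simp
      thus ?thesis by simp
    qed
    hence "(\<lambda>x. complex_of_real (L x) * h x) = k" by auto
    thus "h \<in> mult_dom X L" using k(1) h by (simp add: mult_dom_def)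
  qed
qed


context
  fixes p :: nat and \<theta> :: "nat \<Rightarrow> real" and n :: nat
  assumes p: "prime p"
begin

lemma p0': "p > 0" using p prime_gt_0_nat by blast

definition Kc :: "int \<times> int \<Rightarrow> real" where "Kc z = real_of_int (\<bar>fst z\<bar> + \<bar>snd z\<bar>) + 2 * real p ^ n"

lemma comm_expand:
  assumes f: "f \<in> CC"
  shows "(\<lambda>x. complex_of_real (LSigma p x) * pi_theta p \<theta> n f g x - pi_theta p \<theta> n f (\<lambda>y. complex_of_real (LSigma p y) * g y) x)
    = (\<lambda>x. \<Sum>z\<in>{z. f z \<noteq> 0}. f z * (complex_of_real (LSigma p x - LSigma p (x - emb p n z)) * Uop p \<theta> n z g x))"
  unfolding PI_sumC[OF p0' f]
  by (rule ext) (simp add: Uop_def sum_distrib_left sum_subtractf[symmetric] algebra_simps)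

lemma comm_term:
  fixes c :: complex and z :: "int \<times> int"
  assumes g: "g \<in> l2 (Gamma_n p n)"
  defines "W \<equiv> (\<lambda>x. c * (complex_of_real (LSigma p x - LSigma p (x - emb p n z)) * Uop p \<theta> n z g x))"
  shows "W \<in> l2 (Gamma_n p n)" "l2norm W \<le> cmod c * Kc z * l2norm g"
proof -
  have U: "Uop p \<theta> n z g \<in> l2 (Gamma_n p n)" "nsq (Uop p \<theta> n z g) = nsq g" using Uop_l2[OF p0' g] by blast+
  have K0: "Kc z \<ge> 0" by (simp add: Kc_def)
  have bnd: "cmod (W x) \<le> (cmod c * Kc z) * cmod (Uop p \<theta> n z g x)" for x
  proof (cases "x \<in> Gamma_n p n")
    case True
    have "\<bar>LSigma p x - LSigma p (x - emb p n z)\<bar> \<le> Kc z" unfolding Kc_def by (rule LSigma_diff[OF p True])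
    hence a: "cmod (complex_of_real (LSigma p x - LSigma p (x - emb p n z))) \<le> Kc z" by (simp only: norm_of_real)
    have "cmod (W x) = cmod c * (cmod (complex_of_real (LSigma p x - LSigma p (x - emb p n z))) * cmod (Uop p \<theta> n z g x))"
      unfolding W_def norm_mult ..
    also have "\<dots> \<le> cmod c * (Kc z * cmod (Uop p \<theta> n z g x))"
      by (intro mult_left_mono mult_right_mono a) auto
    finally show ?thesis by (simp add: mult.assoc)
  next
    case False thus ?thesis using l2D(2)[OF U(1) False] by (simp add: W_def)
  qed
  have "sqs W" by (rule sqs_compare(1)[OF l2D(1)[OF U(1)] bnd])
  moreover have "W x = 0" if "x \<notin> Gamma_n p n" for x using l2D(2)[OF U(1) that] by (simp add: W_def)
  ultimately show "W \<in> l2 (Gamma_n p n)" by (rule l2I)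
  have "l2norm W \<le> (cmod c * Kc z) * l2norm (Uop p \<theta> n z g)"
    by (rule l2norm_compare[OF l2D(1)[OF U(1)] bnd]) (use K0 in simp)
  thus "l2norm W \<le> cmod c * Kc z * l2norm g" by (simp add: l2norm_nsq U(2))
qed

lemma comm_bound:
  assumes f: "f \<in> CC" and g: "g \<in> mult_dom (Gamma_n p n) (LSigma p)"
  shows "pi_theta p \<theta> n f g \<in> mult_dom (Gamma_n p n) (LSigma p)"
    "l2norm (\<lambda>x. mult_op (LSigma p) (pi_theta p \<theta> n f g) x - pi_theta p \<theta> n f (mult_op (LSigma p) g) x)
      \<le> (\<Sum>z\<in>{z. f z \<noteq> 0}. cmod (f z) * Kc z) * l2norm g"
proof -
  define A where "A = {z. f z \<noteq> 0}"
  have fA: "finite A" using f by (simp add: A_def CC_def)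
  have g2: "g \<in> l2 (Gamma_n p n)" and Lg: "(\<lambda>y. complex_of_real (LSigma p y) * g y) \<in> l2 (Gamma_n p n)"
    using g by (auto simp: mult_dom_def)
  define W where "W z = (\<lambda>x. f z * (complex_of_real (LSigma p x - LSigma p (x - emb p n z)) * Uop p \<theta> n z g x))" for z
  have W: "W z \<in> l2 (Gamma_n p n)" "l2norm (W z) \<le> cmod (f z) * Kc z * l2norm g" for z
    unfolding W_def using comm_term[OF g2] by blast+
  have ce: "(\<lambda>x. mult_op (LSigma p) (pi_theta p \<theta> n f g) x - pi_theta p \<theta> n f (mult_op (LSigma p) g) x)
      = (\<lambda>x. \<Sum>z\<in>A. W z x)"
    unfolding mult_op_def comm_expand[OF f] W_def A_def ..
  have sl2: "(\<lambda>x. \<Sum>z\<in>A. W z x) \<in> l2 (Gamma_n p n)" by (rule l2_sum[OF fA W(1)])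
  have "(\<lambda>x. complex_of_real (LSigma p x) * pi_theta p \<theta> n f g x)
      = (\<lambda>x. pi_theta p \<theta> n f (\<lambda>y. complex_of_real (LSigma p y) * g y) x + (\<lambda>x. \<Sum>z\<in>A. W z x) x)"
    using fun_cong[OF ce] unfolding mult_op_def by (auto simp: algebra_simps)
  hence "(\<lambda>x. complex_of_real (LSigma p x) * pi_theta p \<theta> n f g x) \<in> l2 (Gamma_n p n)"
    using l2_add[OF PI_l2[OF p0' f Lg] sl2] by simp
  thus "pi_theta p \<theta> n f g \<in> mult_dom (Gamma_n p n) (LSigma p)"
    using PI_l2[OF p0' f g2] by (simp add: mult_dom_def)
  have "l2norm (\<lambda>x. \<Sum>z\<in>A. W z x) \<le> (\<Sum>z\<in>A. l2norm (W z))"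
    by (rule l2norm_sum[OF fA]) (use W(1) l2D(1) in blast)
  also have "\<dots> \<le> (\<Sum>z\<in>A. cmod (f z) * Kc z * l2norm g)" by (rule sum_mono[OF W(2)])
  finally show "l2norm (\<lambda>x. mult_op (LSigma p) (pi_theta p \<theta> n f g) x - pi_theta p \<theta> n f (mult_op (LSigma p) g) x)
      \<le> (\<Sum>z\<in>{z. f z \<noteq> 0}. cmod (f z) * Kc z) * l2norm g"
    unfolding ce by (simp add: sum_distrib_right A_def)
qed

end


definition res :: "('x \<Rightarrow> real) \<Rightarrow> ('x \<Rightarrow> complex) \<Rightarrow> 'x \<Rightarrow> complex" where
  "res L g = (\<lambda>x. g x / (complex_of_real (L x) - \<i>))"

lemma cmod_Li_sq: "(cmod (complex_of_real r - \<i>))\<^sup>2 = r\<^sup>2 + 1"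
  by (simp add: cmod_power2)

lemma cmod_Li_ge1: "cmod (complex_of_real r - \<i>) \<ge> 1"
proof -
  have "(cmod (complex_of_real r - \<i>))\<^sup>2 \<ge> 1\<^sup>2" unfolding cmod_Li_sq by simp
  thus ?thesis using abs_le_square_iff[of 1 "cmod (complex_of_real r - \<i>)"] by simp
qed

lemma cmod_Li_ge: "cmod (complex_of_real r - \<i>) \<ge> \<bar>r\<bar>"
proof -
  have "(cmod (complex_of_real r - \<i>))\<^sup>2 \<ge> r\<^sup>2" unfolding cmod_Li_sq by simp
  thus ?thesis using abs_le_square_iff[of r "cmod (complex_of_real r - \<i>)"] by simp
qed

lemma Li_nz: "complex_of_real r - \<i> \<noteq> 0"
  using cmod_Li_ge1[of r] by auto

lemma res_le: "cmod (res L g x) \<le> 1 * cmod (g x)"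
proof -
  have "cmod (res L g x) = cmod (g x) / cmod (complex_of_real (L x) - \<i>)" by (simp add: res_def norm_divide)
  also have "\<dots> \<le> cmod (g x) / 1" by (rule divide_left_mono) (use cmod_Li_ge1 Li_nz[of "L x"] in auto)
  finally show ?thesis by simp
qed

lemma Lres_le: "cmod (complex_of_real (L x) * res L g x) \<le> 1 * cmod (g x)"
proof -
  have "cmod (complex_of_real (L x) * res L g x) = \<bar>L x\<bar> * cmod (g x) / cmod (complex_of_real (L x) - \<i>)"
    by (simp add: res_def norm_divide norm_mult)
  also have "\<dots> \<le> cmod (g x)"
  proof (cases "g x = 0")
    case False
    have c: "cmod (complex_of_real (L x) - \<i>) > 0" using Li_nz by simp
    have "\<bar>L x\<bar> * cmod (g x) \<le> cmod (complex_of_real (L x) - \<i>) * cmod (g x)"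
      by (intro mult_right_mono cmod_Li_ge) auto
    thus ?thesis using c by (simp add: divide_le_eq mult.commute)
  qed simp
  finally show ?thesis by simp
qed

lemma res_le_M:
  assumes "L x > M" "M > 0"
  shows "cmod (res L g x) \<le> cmod (g x) / M"
proof -
  have "cmod (res L g x) = cmod (g x) / cmod (complex_of_real (L x) - \<i>)" by (simp add: res_def norm_divide)
  also have "\<dots> \<le> cmod (g x) / M"
  proof (rule divide_left_mono)
    show "M \<le> cmod (complex_of_real (L x) - \<i>)" using cmod_Li_ge[of "L x"] assms by simp
    have "cmod (complex_of_real (L x) - \<i>) > 0" using Li_nz[of "L x"] by simp
    thus "0 < cmod (complex_of_real (L x) - \<i>) * M" using assms by simp
  qed simp
  finally show ?thesis .
qed

lemma res_bounded: "bounded_op X (res L)"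
  unfolding bounded_op_def
proof (intro conjI ballI allI exI)
  fix g assume g: "g \<in> l2 X"
  show "res L g \<in> l2 X"
  proof (rule l2I)
    show "sqs (res L g)" by (rule sqs_compare(1)[OF l2D(1)[OF g] res_le[of L g]])
  qed (simp add: res_def l2D(2)[OF g])
  show "l2norm (res L g) \<le> 1 * l2norm g" by (rule l2norm_compare[OF l2D(1)[OF g] res_le[of L g]]) simp
next
  fix g h :: "'a \<Rightarrow> complex"
  show "res L (\<lambda>x. g x + h x) = (\<lambda>x. res L g x + res L h x)" by (simp add: res_def add_divide_distrib)
next
  fix g :: "'a \<Rightarrow> complex" and c
  show "res L (\<lambda>x. c * g x) = (\<lambda>x. c * res L g x)" by (simp add: res_def)
qed

lemma res_dom:
  assumes g: "g \<in> l2 X"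
  shows "res L g \<in> mult_dom X L" "(\<lambda>x. mult_op L (res L g) x - \<i> * res L g x) = g"
proof -
  have r: "res L g \<in> l2 X" using res_bounded g unfolding bounded_op_def by blast
  have "(\<lambda>x. complex_of_real (L x) * res L g x) \<in> l2 X"
  proof (rule l2I)
    show "sqs (\<lambda>x. complex_of_real (L x) * res L g x)" by (rule sqs_compare(1)[OF l2D(1)[OF g] Lres_le[of L _ g]])
  qed (simp add: res_def l2D(2)[OF g])
  thus "res L g \<in> mult_dom X L" using r by (simp add: mult_dom_def)
  show "(\<lambda>x. mult_op L (res L g) x - \<i> * res L g x) = g"
  proof
    fix x
    have "mult_op L (res L g) x - \<i> * res L g x = (complex_of_real (L x) - \<i>) * (g x / (complex_of_real (L x) - \<i>))"
      unfolding mult_op_def res_def left_diff_distrib ..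
    also have "\<dots> = g x" using Li_nz[of "L x"] by simp
    finally show "mult_op L (res L g) x - \<i> * res L g x = g x" .
  qed
qed

lemma res_left: "res L (\<lambda>x. mult_op L g x - \<i> * g x) = g"
proof
  fix x
  have "res L (\<lambda>x. mult_op L g x - \<i> * g x) x = ((complex_of_real (L x) - \<i>) * g x) / (complex_of_real (L x) - \<i>)"
    unfolding mult_op_def res_def left_diff_distrib ..
  also have "\<dots> = g x" using Li_nz[of "L x"] by simp
  finally show "res L (\<lambda>x. mult_op L g x - \<i> * g x) x = g x" .
qed

definition rnd :: "real \<Rightarrow> complex \<Rightarrow> complex" where
  "rnd \<delta> c = (of_int \<lfloor>Re c / \<delta>\<rfloor> + \<i> * of_int \<lfloor>Im c / \<delta>\<rfloor>) * complex_of_real \<delta>"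

lemma floor_err: fixes a \<delta> :: real assumes "\<delta> > 0" shows "(a - \<delta> * of_int \<lfloor>a / \<delta>\<rfloor>)\<^sup>2 \<le> \<delta>\<^sup>2"
proof -
  have 1: "of_int \<lfloor>a / \<delta>\<rfloor> \<le> a / \<delta>" "a / \<delta> < of_int \<lfloor>a / \<delta>\<rfloor> + 1" by linarith+
  have "\<delta> * of_int \<lfloor>a / \<delta>\<rfloor> \<le> \<delta> * (a / \<delta>)" using 1(1) assms by (intro mult_left_mono) auto
  moreover have "\<delta> * (a / \<delta>) < \<delta> * (of_int \<lfloor>a / \<delta>\<rfloor> + 1)" using 1(2) assms by (intro mult_strict_left_mono) auto
  ultimately have "\<delta> * of_int \<lfloor>a / \<delta>\<rfloor> \<le> a" "a < \<delta> * of_int \<lfloor>a / \<delta>\<rfloor> + \<delta>"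
    using assms by (simp_all add: distrib_left)
  hence "0 \<le> a - \<delta> * of_int \<lfloor>a / \<delta>\<rfloor>" "a - \<delta> * of_int \<lfloor>a / \<delta>\<rfloor> \<le> \<delta>" by linarith+
  thus ?thesis by (intro power_mono) auto
qed

lemma rnd_err: assumes "\<delta> > 0" shows "(cmod (c - rnd \<delta> c))\<^sup>2 \<le> 2 * \<delta>\<^sup>2"
proof -
  have "(cmod (c - rnd \<delta> c))\<^sup>2 = (Re c - \<delta> * of_int \<lfloor>Re c / \<delta>\<rfloor>)\<^sup>2 + (Im c - \<delta> * of_int \<lfloor>Im c / \<delta>\<rfloor>)\<^sup>2"
    by (simp add: cmod_power2 rnd_def mult_ac)
  also have "\<dots> \<le> \<delta>\<^sup>2 + \<delta>\<^sup>2" by (intro add_mono floor_err assms)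
  finally show ?thesis by simp
qed

lemma floor_range:
  fixes a \<delta> :: real
  assumes "\<delta> > 0" "\<bar>a\<bar> \<le> 1"
  shows "\<lfloor>a / \<delta>\<rfloor> \<in> {- (\<lceil>1 / \<delta>\<rceil> + 1)..\<lceil>1 / \<delta>\<rceil> + 1}"
proof -
  have "a / \<delta> \<le> 1 / \<delta>" "- (1 / \<delta>) \<le> a / \<delta>" using assms by (simp_all add: divide_right_mono field_simps)
  moreover have "1 / \<delta> \<le> of_int \<lceil>1 / \<delta>\<rceil>" by linarith
  ultimately have u: "a / \<delta> \<le> 1 / \<delta>" "- (1 / \<delta>) \<le> a / \<delta>" "1 / \<delta> \<le> of_int \<lceil>1 / \<delta>\<rceil>" by auto
  have f1: "of_int \<lfloor>a / \<delta>\<rfloor> \<le> a / \<delta>" "a / \<delta> < of_int \<lfloor>a / \<delta>\<rfloor> + 1" by linarith+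
  have gA: "\<And>f a b c :: real. f \<le> a \<Longrightarrow> a \<le> b \<Longrightarrow> b \<le> c \<Longrightarrow> f \<le> c + 1" by linarith
  have gB: "\<And>f a b c :: real. b \<le> c \<Longrightarrow> - b \<le> a \<Longrightarrow> a < f + 1 \<Longrightarrow> - (c + 1) \<le> f" by linarith
  have A: "of_int \<lfloor>a / \<delta>\<rfloor> \<le> (of_int (\<lceil>1 / \<delta>\<rceil> + 1) :: real)"
    unfolding of_int_add of_int_1 by (rule gA[OF f1(1) u(1) u(3)])
  have B: "(of_int (- (\<lceil>1 / \<delta>\<rceil> + 1)) :: real) \<le> of_int \<lfloor>a / \<delta>\<rfloor>"
    unfolding of_int_add of_int_1 of_int_minus by (rule gB[OF u(3) u(2) f1(2)])
  show ?thesis using A B unfolding atLeastAtMost_iff of_int_le_iff by blast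
qed

lemma rnd_grid:
  assumes "\<delta> > 0" "cmod c \<le> 1"
  shows "rnd \<delta> c \<in> (\<lambda>(j, k). (of_int j + \<i> * of_int k) * complex_of_real \<delta>) `
      ({- (\<lceil>1 / \<delta>\<rceil> + 1)..\<lceil>1 / \<delta>\<rceil> + 1} \<times> {- (\<lceil>1 / \<delta>\<rceil> + 1)..\<lceil>1 / \<delta>\<rceil> + 1})"
proof -
  have "\<bar>Re c\<bar> \<le> 1" "\<bar>Im c\<bar> \<le> 1" using assms(2) abs_Re_le_cmod abs_Im_le_cmod order_trans by blast+
  hence "(\<lfloor>Re c / \<delta>\<rfloor>, \<lfloor>Im c / \<delta>\<rfloor>) \<in> {- (\<lceil>1 / \<delta>\<rceil> + 1)..\<lceil>1 / \<delta>\<rceil> + 1} \<times> {- (\<lceil>1 / \<delta>\<rceil> + 1)..\<lceil>1 / \<delta>\<rceil> + 1}"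
    using floor_range[OF assms(1)] by blast
  thus ?thesis unfolding rnd_def by (rule rev_image_eqI) simp
qed


lemma res_compact:
  fixes X :: "'x set" and L :: "'x \<Rightarrow> real"
  assumes fin: "\<And>M. finite {x \<in> X. L x \<le> M}"
  shows "compact_op X (res L)"
  unfolding compact_op_def
proof (intro allI impI)
  fix \<epsilon> :: real assume e: "\<epsilon> > 0"
  define M where "M = 2 / \<epsilon>"
  have M0: "M > 0" using e by (simp add: M_def)
  define S where "S = {x \<in> X. L x \<le> M}"
  have fS: "finite S" unfolding S_def by (rule fin)
  have SX: "S \<subseteq> X" by (auto simp: S_def)
  define s where "s = real (card S)"
  define \<delta> where "\<delta> = \<epsilon> / (2 * sqrt (2 * (s + 1)))"
  have s0: "s \<ge> 0" by (simp add: s_def)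
  have d0: "\<delta> > 0" using e s0 by (simp add: \<delta>_def)
  define K where "K = \<lceil>1 / \<delta>\<rceil> + 1"
  define G where "G = (\<lambda>(j, k). (of_int j + \<i> * of_int k) * complex_of_real \<delta>) ` ({- K..K} \<times> {- K..K})"
  have fG: "finite G" by (simp add: G_def)
  define Fs where "Fs = {h :: 'x \<Rightarrow> complex. \<forall>x. (x \<in> S \<longrightarrow> h x \<in> G) \<and> (x \<notin> S \<longrightarrow> h x = 0)}"
  have fFs: "finite Fs" unfolding Fs_def by (rule finite_set_of_finite_funs[OF fS fG])
  have FsX: "Fs \<subseteq> l2 X"
  proof
    fix h assume "h \<in> Fs"
    thus "h \<in> l2 X" by (intro fin_supp_l2[OF fS _ SX]) (auto simp: Fs_def)
  qed
  have dsq: "2 * \<delta>\<^sup>2 * s \<le> \<epsilon>\<^sup>2 / 4"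
  proof -
    have "\<delta>\<^sup>2 = \<epsilon>\<^sup>2 / (4 * (2 * (s + 1)))" using s0 by (simp add: \<delta>_def power_divide power_mult_distrib)
    hence "2 * \<delta>\<^sup>2 * s = \<epsilon>\<^sup>2 / 4 * (s / (s + 1))" using s0 by (simp add: field_simps)
    also have "\<dots> \<le> \<epsilon>\<^sup>2 / 4 * 1" using s0 by (intro mult_left_mono) auto
    finally show ?thesis by simp
  qed
  show "\<exists>F. finite F \<and> F \<subseteq> l2 X \<and> (\<forall>g\<in>l2 X. l2norm g \<le> 1 \<longrightarrow> (\<exists>h\<in>F. l2norm (\<lambda>x. res L g x - h x) < \<epsilon>))"
  proof (intro exI conjI ballI impI)
    show "finite Fs" "Fs \<subseteq> l2 X" by (rule fFs, rule FsX)
  next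
    fix g assume g: "g \<in> l2 X" and g1: "l2norm g \<le> 1"
    define h where "h = (\<lambda>x. if x \<in> S then rnd \<delta> (res L g x) else 0)"
    have "h \<in> Fs" unfolding Fs_def h_def G_def K_def
    proof (intro CollectI allI conjI impI)
      fix x assume "x \<in> S"
      have "cmod (res L g x) \<le> 1 * cmod (g x)" by (rule res_le)
      also have "\<dots> \<le> 1" using coord_le_l2norm[OF l2D(1)[OF g], of x] g1 by simp
      finally show "(if x \<in> S then rnd \<delta> (res L g x) else 0) \<in> (\<lambda>(j, k). (of_int j + \<i> * of_int k) * complex_of_real \<delta>) `
          ({- (\<lceil>1 / \<delta>\<rceil> + 1)..\<lceil>1 / \<delta>\<rceil> + 1} \<times> {- (\<lceil>1 / \<delta>\<rceil> + 1)..\<lceil>1 / \<delta>\<rceil> + 1})"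
        using rnd_grid[OF d0] \<open>x \<in> S\<close> by simp
    qed simp
    define Bf where "Bf = (\<lambda>x. (if x \<in> S then 2 * \<delta>\<^sup>2 else 0) + (1 / M\<^sup>2) * (cmod (g x))\<^sup>2)"
    have pw: "(cmod (res L g x - h x))\<^sup>2 \<le> Bf x" for x
    proof (cases "x \<in> S")
      case True
      have "(cmod (res L g x - h x))\<^sup>2 \<le> 2 * \<delta>\<^sup>2" unfolding h_def using True by (simp add: rnd_err[OF d0])
      moreover have "Bf x = 2 * \<delta>\<^sup>2 + (1 / M\<^sup>2) * (cmod (g x))\<^sup>2" using True unfolding Bf_def by simp
      moreover have "0 \<le> (1 / M\<^sup>2) * (cmod (g x))\<^sup>2" by simp
      ultimately show ?thesis by linarith
    next
      case False
      show ?thesis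
      proof (cases "x \<in> X")
        case True
        hence "L x > M" using False by (simp add: S_def)
        hence "cmod (res L g x) \<le> cmod (g x) / M" by (rule res_le_M[OF _ M0])
        hence "(cmod (res L g x))\<^sup>2 \<le> (cmod (g x) / M)\<^sup>2" by (intro power_mono) auto
        thus ?thesis using False by (simp add: Bf_def h_def power_divide)
      next
        case False
        thus ?thesis using \<open>x \<notin> S\<close> l2D(2)[OF g False] by (simp add: Bf_def h_def res_def)
      qed
    qed
    have s1: "(\<lambda>x. if x \<in> S then 2 * \<delta>\<^sup>2 else 0) summable_on UNIV"
      by (rule infsum_finite_supp(2)[OF fS]) simp
    have s2: "(\<lambda>x. (1 / M\<^sup>2) * (cmod (g x))\<^sup>2) summable_on UNIV"
      by (rule summable_on_cmult_right) (use l2D(1)[OF g] in \<open>simp add: sqs_def\<close>)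
    have sB: "Bf summable_on UNIV" unfolding Bf_def by (rule summable_on_add[OF s1 s2])
    have sL: "(\<lambda>x. (cmod (res L g x - h x))\<^sup>2) summable_on UNIV"
      by (rule summable_on_comparison_test[OF sB pw]) simp
    have "nsq (\<lambda>x. res L g x - h x) \<le> infsum Bf UNIV" unfolding nsq_def by (rule infsum_mono[OF sL sB pw])
    also have "infsum Bf UNIV = infsum (\<lambda>x. if x \<in> S then 2 * \<delta>\<^sup>2 else 0) UNIV + infsum (\<lambda>x. (1 / M\<^sup>2) * (cmod (g x))\<^sup>2) UNIV"
      unfolding Bf_def by (rule infsum_add[OF s1 s2])
    also have "infsum (\<lambda>x. if x \<in> S then 2 * \<delta>\<^sup>2 else 0) UNIV = (\<Sum>x\<in>S. if x \<in> S then 2 * \<delta>\<^sup>2 else 0)"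
      by (rule infsum_finite_supp(1)[OF fS]) simp
    also have "\<dots> = 2 * \<delta>\<^sup>2 * s" by (simp add: s_def)
    also have "infsum (\<lambda>x. (1 / M\<^sup>2) * (cmod (g x))\<^sup>2) UNIV = (1 / M\<^sup>2) * nsq g"
      unfolding nsq_def by (rule infsum_cmult_right')
    also have "(1 / M\<^sup>2) * nsq g \<le> (1 / M\<^sup>2) * 1"
    proof (rule mult_left_mono)
      have "nsq g = (l2norm g)\<^sup>2" by (simp add: l2norm_sq)
      also have "\<dots> \<le> 1" using g1 l2norm_nonneg[of g] by (simp add: power_le_one)
      finally show "nsq g \<le> 1" .
    qed simp
    also have "(1 / M\<^sup>2) * 1 = \<epsilon>\<^sup>2 / 4" using e by (simp add: M_def power_divide)
    finally have "nsq (\<lambda>x. res L g x - h x) \<le> 2 * \<delta>\<^sup>2 * s + \<epsilon>\<^sup>2 / 4" by simp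
    also have "\<dots> \<le> \<epsilon>\<^sup>2 / 2" using dsq by simp
    also have "\<dots> < \<epsilon>\<^sup>2" using e by simp
    finally have "sqrt (nsq (\<lambda>x. res L g x - h x)) < sqrt (\<epsilon>\<^sup>2)" by (rule real_sqrt_less_mono)
    hence "l2norm (\<lambda>x. res L g x - h x) < \<epsilon>" using e by (simp add: l2norm_nsq)
    thus "\<exists>h\<in>Fs. l2norm (\<lambda>x. res L g x - h x) < \<epsilon>" using \<open>h \<in> Fs\<close> by blast
  qed
qed


lemma LSigma_sublevel_finite:
  assumes p0: "p > 0"
  shows "finite {x \<in> Gamma_n p n. LSigma p x \<le> M}"
proof -
  define N where "N = real p ^ n"
  have N1: "N \<ge> 1" using p0 by (simp add: N_def one_le_power)
  define B where "B = \<lceil>M * N\<rceil>"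
  have "{x \<in> Gamma_n p n. LSigma p x \<le> M} \<subseteq> emb p n ` ({-B..B} \<times> {-B..B})"
  proof
    fix x assume x: "x \<in> {x \<in> Gamma_n p n. LSigma p x \<le> M}"
    then obtain v where v: "x = emb p n v" by (auto simp: Gamma_emb)
    have c: "\<bar>of_rat (fst x) :: real\<bar> = \<bar>of_int (fst v)\<bar> / N" "\<bar>of_rat (snd x) :: real\<bar> = \<bar>of_int (snd v)\<bar> / N"
      using N1 by (simp_all add: v emb_fst of_rat_divide of_rat_power N_def)
    have le: "\<bar>of_int (fst v)\<bar> / N + \<bar>of_int (snd v)\<bar> / N \<le> M"
      using LSigma_ge[of x p] x c by simp
    have a1: "\<bar>of_int (fst v)\<bar> / N \<le> M" "\<bar>of_int (snd v)\<bar> / N \<le> M"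
      using le N1 by (smt (verit) divide_nonneg_nonneg abs_ge_zero)+
    hence "\<bar>of_int (fst v)\<bar> \<le> M * N" "\<bar>of_int (snd v)\<bar> \<le> M * N" using N1 by (simp_all add: divide_le_eq)
    hence "of_int \<bar>fst v\<bar> \<le> (of_int B :: real)" "of_int \<bar>snd v\<bar> \<le> (of_int B :: real)"
      unfolding B_def by (simp_all, linarith+)
    hence "\<bar>fst v\<bar> \<le> B" "\<bar>snd v\<bar> \<le> B" by (simp_all only: of_int_le_iff)
    hence "v \<in> {-B..B} \<times> {-B..B}" by (cases v) auto
    thus "x \<in> emb p n ` ({-B..B} \<times> {-B..B})" using v by blast
  qed
  thus ?thesis by (rule finite_subset) simp
qed

lemma LSigma_compact_resolvent:
  assumes p0: "p > 0"
  shows "compact_resolvent (Gamma_n p n) (mult_dom (Gamma_n p n) (LSigma p)) (mult_op (LSigma p))"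
  unfolding compact_resolvent_def
proof (intro exI conjI ballI)
  show "bounded_op (Gamma_n p n) (res (LSigma p))" by (rule res_bounded)
  show "compact_op (Gamma_n p n) (res (LSigma p))" by (rule res_compact[OF LSigma_sublevel_finite[OF p0]])
next
  fix g assume "g \<in> l2 (Gamma_n p n)"
  thus "res (LSigma p) g \<in> mult_dom (Gamma_n p n) (LSigma p)"
    "(\<lambda>x. mult_op (LSigma p) (res (LSigma p) g) x - \<i> * res (LSigma p) g x) = g"
    by (rule res_dom(1), rule res_dom(2))
next
  fix g
  show "res (LSigma p) (\<lambda>x. mult_op (LSigma p) g x - \<i> * g x) = g" by (rule res_left)
qed

theorem proposition3p19:
  fixes p n :: nat and \<theta> :: "nat \<Rightarrow> real"
  assumes "prime p" and "\<theta> \<in> Omega p"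
  shows "spectral_triple_tw (sigma_Z2 (\<theta> (2 * n))) (Gamma_n p n) (pi_theta p \<theta> n)
           (mult_dom (Gamma_n p n) (LSigma p)) (mult_op (LSigma p))"
proof -
  have p0: "p > 0" using assms(1) prime_gt_0_nat by blast
  show ?thesis
    unfolding spectral_triple_tw_def
  proof (intro conjI ballI)
    show "star_rep (sigma_Z2 (\<theta> (2 * n))) (Gamma_n p n) (pi_theta p \<theta> n)" by (rule PI_star_rep[OF p0])
  next
    fix f :: "int \<times> int \<Rightarrow> complex" assume "f \<in> CC"
    thus "opnorm (Gamma_n p n) (pi_theta p \<theta> n f) = univ_norm (sigma_Z2 (\<theta> (2 * n))) f"
      by (rule univ_norm_eq[OF p0])
  next
    show "selfadjoint (Gamma_n p n) (mult_dom (Gamma_n p n) (LSigma p)) (mult_op (LSigma p))"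
      by (rule mult_selfadjoint)
  next
    show "compact_resolvent (Gamma_n p n) (mult_dom (Gamma_n p n) (LSigma p)) (mult_op (LSigma p))"
      by (rule LSigma_compact_resolvent[OF p0])
  next
    fix f :: "int \<times> int \<Rightarrow> complex" assume f: "f \<in> CC"
    have eq: "{g \<in> mult_dom (Gamma_n p n) (LSigma p). pi_theta p \<theta> n f g \<in> mult_dom (Gamma_n p n) (LSigma p)}
        = mult_dom (Gamma_n p n) (LSigma p)"
      using comm_bound(1)[OF assms(1) f] by blast
    show "dense_in_l2 (Gamma_n p n) {g \<in> mult_dom (Gamma_n p n) (LSigma p). pi_theta p \<theta> n f g \<in> mult_dom (Gamma_n p n) (LSigma p)}"
      unfolding eq by (rule mult_dom_dense)
    show "\<exists>C. \<forall>g\<in>{g \<in> mult_dom (Gamma_n p n) (LSigma p). pi_theta p \<theta> n f g \<in> mult_dom (Gamma_n p n) (LSigma p)}.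
        l2norm (\<lambda>x. mult_op (LSigma p) (pi_theta p \<theta> n f g) x - pi_theta p \<theta> n f (mult_op (LSigma p) g) x) \<le> C * l2norm g"
      unfolding eq using comm_bound(2)[OF assms(1) f] by blast
  qed
qed


end
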